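(* Let $m,n$ be even nonnegative integers. If $A(m)$ and $A(n)$ are isomorphic as edge-labeled directed graphs, then $m=n$.
   Context: A hyperbinary expansion of a nonnegative integer $n$ is a word $x_0\cdots x_k$ over $\{0,1,2\}$ with $x_0\ne0$ and $\sum_i x_i2^{k-i}=n$; the empty word is the unique expansion of $0$. $\mathcal H(n)$ is the set of such expansions. $A(n)$ is the directed graph on $\mathcal H(n)$ with the following labeled arcs, for arbitrary words $\mathbf x,\mathbf y$ whenever both endpoints lie in $\mathcal H(n)$: \begin{itemize} \item an arc labeled $\to$ from $\mathbf x02\mathbf y$ to $\mathbf x10\mathbf y$ and from $2\mathbf y$ to $10\mathbf y$; \item an arc labeled $\twoheadrightarrow$ from $\mathbf x12\mathbf y$ to $\mathbf x20\mathbf y$. \end{itemize} An isomorphism of edge-labeled directed graphs is a bijection $\varphi$ of vertex sets such that $(x,y)$ is an arc with label $\ell$ if and only if $(\varphi(x),\varphi(y))$ is an arc with label $\ell$. *)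

theory Defs
  imports Main
begin

text \<open>Words over the alphabet {0,1,2} are represented as lists of naturals.
  The value of a word x_0...x_k is sum x_i 2^(k-i) (most significant digit first).\<close>

fun hval :: "nat list \<Rightarrow> nat" where
  "hval w = foldl (\<lambda>a d. 2 * a + d) 0 w"

definition hyperbinary :: "nat \<Rightarrow> nat list set" where
  "hyperbinary n = {w. set w \<subseteq> {0, 1, 2} \<and> (w \<noteq> [] \<longrightarrow> hd w \<noteq> 0) \<and> hval w = n}"

definition arcA :: "nat \<Rightarrow> nat list \<Rightarrow> nat list \<Rightarrow> bool" where
  "arcA n u v \<longleftrightarrow> u \<in> hyperbinary n \<and> v \<in> hyperbinary n \<and>
     ((\<exists>x y. u = x @ [0, 2] @ y \<and> v = x @ [1, 0] @ y) \<or>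
      (\<exists>y. u = 2 # y \<and> v = [1, 0] @ y))"

definition arcB :: "nat \<Rightarrow> nat list \<Rightarrow> nat list \<Rightarrow> bool" where
  "arcB n u v \<longleftrightarrow> u \<in> hyperbinary n \<and> v \<in> hyperbinary n \<and>
     (\<exists>x y. u = x @ [1, 2] @ y \<and> v = x @ [2, 0] @ y)"

definition A_iso :: "nat \<Rightarrow> nat \<Rightarrow> bool" where
  "A_iso m n \<longleftrightarrow> (\<exists>\<phi>. bij_betw \<phi> (hyperbinary m) (hyperbinary n) \<and>
     (\<forall>u\<in>hyperbinary m. \<forall>v\<in>hyperbinary m.
        (arcA m u v \<longleftrightarrow> arcA n (\<phi> u) (\<phi> v)) \<and>
        (arcB m u v \<longleftrightarrow> arcB n (\<phi> u) (\<phi> v))))"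

end

theory Submission
  imports Defs
begin

definition ideal :: "(nat \<Rightarrow> bool) \<Rightarrow> nat \<Rightarrow> nat set \<Rightarrow> bool" where
"ideal b M I \<longleftrightarrow> I \<subseteq> {1..M} \<and> (\<forall>q. 1 \<le> q \<and> q < M \<longrightarrow>
   (Suc q \<in> I \<and> b q \<longrightarrow> q \<in> I) \<and> (q \<in> I \<and> \<not> b q \<longrightarrow> Suc q \<in> I))"

definition down :: "(nat \<Rightarrow> bool) \<Rightarrow> nat \<Rightarrow> nat \<Rightarrow> nat set" where
"down b M p = {q. 1 \<le> q \<and> q \<le> M \<and> ((q \<le> p \<and> (\<forall>r. q \<le> r \<and> r < p \<longrightarrow> b r)) \<or>
   (p \<le> q \<and> (\<forall>r. p \<le> r \<and> r < q \<longrightarrow> \<not> b r)))}"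

definition rem :: "(nat \<Rightarrow> bool) \<Rightarrow> nat \<Rightarrow> nat set \<Rightarrow> nat \<Rightarrow> bool" where
"rem b M I p \<longleftrightarrow> p \<in> I \<and> ideal b M (I - {p})"

lemma down_self: "1 \<le> p \<Longrightarrow> p \<le> M \<Longrightarrow> p \<in> down b M p"
  by (auto simp: down_def)

lemma down_cl1: assumes "Suc q \<in> down b M p" "b q" "1 \<le> q" shows "q \<in> down b M p"
proof -
  have a: "Suc q \<le> M" "b q" "1 \<le> q" using assms by (auto simp: down_def)
  have h: "Suc q \<le> p \<and> (\<forall>r. Suc q \<le> r \<and> r < p \<longrightarrow> b r) \<or> p \<le> Suc q \<and> (\<forall>r. p \<le> r \<and> r < Suc q \<longrightarrow> \<not> b r)"
     using assms(1) by (simp add: down_def)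
  have "q \<le> p \<and> (\<forall>r. q \<le> r \<and> r < p \<longrightarrow> b r) \<or> p \<le> q \<and> (\<forall>r. p \<le> r \<and> r < q \<longrightarrow> \<not> b r)"
    using h
  proof
    assume h1: "Suc q \<le> p \<and> (\<forall>r. Suc q \<le> r \<and> r < p \<longrightarrow> b r)"
    have "\<forall>r. q \<le> r \<and> r < p \<longrightarrow> b r"
    proof (intro allI impI)
      fix r assume "q \<le> r \<and> r < p"
      then show "b r" using h1 a by (cases "r = q") (auto simp: Suc_le_eq)
    qed
    then show ?thesis using h1 by simp
  next
    assume h2: "p \<le> Suc q \<and> (\<forall>r. p \<le> r \<and> r < Suc q \<longrightarrow> \<not> b r)"
    have "p = Suc q"
    proof (rule ccontr)
      assume "p \<noteq> Suc q"
      then have "p \<le> q" using h2 by simp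
      then show False using h2 a by auto
    qed
    then show ?thesis using a by (auto simp: less_Suc_eq)
  qed
  then show ?thesis using a by (simp add: down_def)
qed

lemma down_cl2: assumes "q \<in> down b M p" "\<not> b q" "Suc q \<le> M" shows "Suc q \<in> down b M p"
proof -
  have a: "Suc q \<le> M" "\<not> b q" "1 \<le> q" using assms by (auto simp: down_def)
  have h: "q \<le> p \<and> (\<forall>r. q \<le> r \<and> r < p \<longrightarrow> b r) \<or> p \<le> q \<and> (\<forall>r. p \<le> r \<and> r < q \<longrightarrow> \<not> b r)"
     using assms(1) by (simp add: down_def)
  have "Suc q \<le> p \<and> (\<forall>r. Suc q \<le> r \<and> r < p \<longrightarrow> b r) \<or> p \<le> Suc q \<and> (\<forall>r. p \<le> r \<and> r < Suc q \<longrightarrow> \<not> b r)"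
    using h
  proof
    assume h2: "q \<le> p \<and> (\<forall>r. q \<le> r \<and> r < p \<longrightarrow> b r)"
    have "p = q"
    proof (rule ccontr)
      assume "p \<noteq> q" then have "q < p" using h2 by simp
      then show False using h2 a by auto
    qed
    then show ?thesis using a by (auto simp: less_Suc_eq)
  next
    assume h2: "p \<le> q \<and> (\<forall>r. p \<le> r \<and> r < q \<longrightarrow> \<not> b r)"
    have "\<forall>r. p \<le> r \<and> r < Suc q \<longrightarrow> \<not> b r"
    proof (intro allI impI)
      fix r assume "p \<le> r \<and> r < Suc q"
      then show "\<not> b r" using h2 a by (cases "r = q") (auto simp: less_Suc_eq)
    qed
    then show ?thesis using h2 by simp
  qed
  then show ?thesis using a by (simp add: down_def)
qed

lemma down_sub: "down b M p \<subseteq> {1..M}"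
  by (auto simp: down_def)

lemma down_ideal: "ideal b M (down b M p)"
  unfolding ideal_def using down_cl1 down_cl2 down_sub by (meson Suc_leI)

lemma ideal_sub: "ideal b M I \<Longrightarrow> I \<subseteq> {1..M}"
  by (simp add: ideal_def)

lemma ideal_c1: "ideal b M I \<Longrightarrow> 1 \<le> q \<Longrightarrow> q < M \<Longrightarrow> Suc q \<in> I \<Longrightarrow> b q \<Longrightarrow> q \<in> I"
  by (simp add: ideal_def)

lemma ideal_c2: "ideal b M I \<Longrightarrow> 1 \<le> q \<Longrightarrow> q < M \<Longrightarrow> q \<in> I \<Longrightarrow> \<not> b q \<Longrightarrow> Suc q \<in> I"
  by (simp add: ideal_def)

lemma left_seg: "ideal b M I \<Longrightarrow> p \<in> I \<Longrightarrow> \<forall>r. q \<le> r \<and> r < p \<longrightarrow> b r \<Longrightarrow> 1 \<le> q \<Longrightarrow> q \<le> p \<Longrightarrow> q \<in> I"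
proof (induction "p - q" arbitrary: q)
  case 0
  then show ?case by simp
next
  case (Suc d)
  have "q < p" using Suc.hyps(2) by simp
  have "Suc q \<in> I" using Suc.hyps(1)[of "Suc q"] Suc.prems \<open>q < p\<close> Suc.hyps(2) by auto
  moreover have "p \<le> M" using Suc ideal_sub by force
  ultimately show ?case using Suc ideal_c1[of b M I q] by auto
qed

lemma right_seg: "ideal b M I \<Longrightarrow> p \<in> I \<Longrightarrow> \<forall>r. p \<le> r \<and> r < q \<longrightarrow> \<not> b r \<Longrightarrow> q \<le> M \<Longrightarrow> p \<le> q \<Longrightarrow> q \<in> I"
proof (induction "q - p" arbitrary: q)
  case 0
  then show ?case by simp
next
  case (Suc d)
  obtain q' where q': "q = Suc q'" "p \<le> q'" using Suc.hyps(2) by (cases q) auto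
  have "q' \<in> I" using Suc.hyps(1)[of q'] Suc.prems q' Suc.hyps(2) by auto
  moreover have "1 \<le> p" using Suc ideal_sub by force
  ultimately show ?case using Suc q' ideal_c2[of b M I q'] by auto
qed

lemma down_least: "ideal b M I \<Longrightarrow> p \<in> I \<Longrightarrow> down b M p \<subseteq> I"
proof
  fix q assume I: "ideal b M I" "p \<in> I" and q: "q \<in> down b M p"
  then have "1 \<le> q" "q \<le> M" and h: "(q \<le> p \<and> (\<forall>r. q \<le> r \<and> r < p \<longrightarrow> b r)) \<or>
   (p \<le> q \<and> (\<forall>r. p \<le> r \<and> r < q \<longrightarrow> \<not> b r))" by (auto simp: down_def)
  then show "q \<in> I" using left_seg[OF I] right_seg[OF I] by blast
qed

lemma rem_iff: assumes "ideal b M I"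
  shows "rem b M I p \<longleftrightarrow> p \<in> I \<and> \<not> (p < M \<and> Suc p \<in> I \<and> b p) \<and>
     \<not> (\<exists>q. p = Suc q \<and> 1 \<le> q \<and> q \<in> I \<and> \<not> b q)"
proof
  assume r: "rem b M I p"
  then have pI: "p \<in> I" and J: "ideal b M (I - {p})" by (auto simp: rem_def)
  have "1 \<le> p" using pI assms ideal_sub by force
  show "p \<in> I \<and> \<not> (p < M \<and> Suc p \<in> I \<and> b p) \<and> \<not> (\<exists>q. p = Suc q \<and> 1 \<le> q \<and> q \<in> I \<and> \<not> b q)"
  proof (intro conjI notI)
    show "p \<in> I" by fact
  next
    assume "p < M \<and> Suc p \<in> I \<and> b p"
    then show False using ideal_c1[OF J, of p] \<open>1 \<le> p\<close> by auto
  next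
    assume "\<exists>q. p = Suc q \<and> 1 \<le> q \<and> q \<in> I \<and> \<not> b q"
    then obtain q where "p = Suc q" "1 \<le> q" "q \<in> I" "\<not> b q" by blast
    moreover have "p \<le> M" using pI assms ideal_sub by force
    ultimately show False using ideal_c2[OF J, of q] by auto
  qed
next
  assume h: "p \<in> I \<and> \<not> (p < M \<and> Suc p \<in> I \<and> b p) \<and> \<not> (\<exists>q. p = Suc q \<and> 1 \<le> q \<and> q \<in> I \<and> \<not> b q)"
  have "ideal b M (I - {p})"
    unfolding ideal_def
  proof (intro conjI allI impI)
    show "I - {p} \<subseteq> {1..M}" using assms ideal_sub by blast
  next
    fix q assume q: "1 \<le> q \<and> q < M" "Suc q \<in> I - {p} \<and> b q"
    then show "q \<in> I - {p}" using h ideal_c1[OF assms, of q] by auto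
  next
    fix q assume q: "1 \<le> q \<and> q < M" "q \<in> I - {p} \<and> \<not> b q"
    then show "Suc q \<in> I - {p}" using h ideal_c2[OF assms, of q] by auto
  qed
  then show "rem b M I p" using h by (simp add: rem_def)
qed

lemma rem_down: assumes "1 \<le> p" "p \<le> M" shows "rem b M (down b M p) q \<longleftrightarrow> q = p"
proof -
  have I: "ideal b M (down b M p)" by (rule down_ideal)
  show ?thesis
  proof
    assume r: "rem b M (down b M p) q"
    then have qd: "q \<in> down b M p" and n1: "\<not> (q < M \<and> Suc q \<in> down b M p \<and> b q)"
      and n2: "\<not> (\<exists>r. q = Suc r \<and> 1 \<le> r \<and> r \<in> down b M p \<and> \<not> b r)"
      using rem_iff[OF I] by auto
    show "q = p"
    proof (rule ccontr)
      assume "q \<noteq> p"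
      from qd have q1: "1 \<le> q" "q \<le> M" and h: "(q \<le> p \<and> (\<forall>r. q \<le> r \<and> r < p \<longrightarrow> b r)) \<or>
         (p \<le> q \<and> (\<forall>r. p \<le> r \<and> r < q \<longrightarrow> \<not> b r))" by (auto simp: down_def)
      show False using h
      proof
        assume h1: "q \<le> p \<and> (\<forall>r. q \<le> r \<and> r < p \<longrightarrow> b r)"
        then have "q < p" using \<open>q \<noteq> p\<close> by simp
        then have "Suc q \<in> down b M p" using h1 assms by (auto simp: down_def)
        then show False using n1 h1 \<open>q < p\<close> assms by auto
      next
        assume h1: "p \<le> q \<and> (\<forall>r. p \<le> r \<and> r < q \<longrightarrow> \<not> b r)"
        then have "p < q" using \<open>q \<noteq> p\<close> by simp
        then obtain r where r: "q = Suc r" "p \<le> r" by (cases q) auto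
        then have "r \<in> down b M p" using h1 assms q1 by (auto simp: down_def)
        then show False using n2 h1 r assms by auto
      qed
    qed
  next
    assume "q = p"
    moreover have "\<not> (p < M \<and> Suc p \<in> down b M p \<and> b p)" by (auto simp: down_def)
    moreover have "\<not> (\<exists>r. p = Suc r \<and> 1 \<le> r \<and> r \<in> down b M p \<and> \<not> b r)" by (auto simp: down_def)
    ultimately show "rem b M (down b M p) q" using rem_iff[OF I] down_self[OF assms] by auto
  qed
qed

lemma walk_right: "ideal b M I \<Longrightarrow> q \<in> I \<Longrightarrow> \<not> (\<exists>r. q = Suc r \<and> 1 \<le> r \<and> r \<in> I \<and> \<not> b r) \<Longrightarrow>
   \<exists>m. rem b M I m \<and> q \<in> down b M m"
proof (induction "M - q" arbitrary: q rule: less_induct)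
  case less
  have q1: "1 \<le> q" "q \<le> M" using less.prems ideal_sub by force+
  show ?case
  proof (cases "q < M \<and> Suc q \<in> I \<and> b q")
    case True
    have lt: "M - Suc q < M - q" using True by (simp add: diff_less_mono2)
    have "\<not> (\<exists>r. Suc q = Suc r \<and> 1 \<le> r \<and> r \<in> I \<and> \<not> b r)" using True by simp
    then obtain m where "rem b M I m" "Suc q \<in> down b M m"
      using less.hyps[OF lt less.prems(1)] True by blast
    then show ?thesis using down_cl1 True q1 by blast
  next
    case False
    then have "rem b M I q" using rem_iff[OF less.prems(1)] less.prems by auto
    then show ?thesis using down_self q1 by blast
  qed
qed

lemma walk_left: "ideal b M I \<Longrightarrow> q \<in> I \<Longrightarrow> \<not> (q < M \<and> Suc q \<in> I \<and> b q) \<Longrightarrow>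
   \<exists>m. rem b M I m \<and> q \<in> down b M m"
proof (induction q rule: less_induct)
  case (less q)
  have q1: "1 \<le> q" "q \<le> M" using less.prems ideal_sub by force+
  show ?case
  proof (cases "\<exists>r. q = Suc r \<and> 1 \<le> r \<and> r \<in> I \<and> \<not> b r")
    case True
    then obtain r where r: "q = Suc r" "1 \<le> r" "r \<in> I" "\<not> b r" by blast
    have lt: "r < q" using r by simp
    have "\<not> (r < M \<and> Suc r \<in> I \<and> b r)" using r by simp
    then obtain m where "rem b M I m" "r \<in> down b M m"
      using less.IH[OF lt less.prems(1) r(3)] by blast
    then show ?thesis using down_cl2 r q1 by blast
  next
    case False
    then have "rem b M I q" using rem_iff[OF less.prems(1)] less.prems by auto
    then show ?thesis using down_self q1 by blast
  qed
qed

lemma walk: assumes "ideal b M I" "q \<in> I" shows "\<exists>m. rem b M I m \<and> q \<in> down b M m"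
proof (cases "q < M \<and> Suc q \<in> I \<and> b q")
  case True
  then obtain m where "rem b M I m" "Suc q \<in> down b M m"
    using walk_right[OF assms(1), of "Suc q"] by auto
  moreover have "1 \<le> q" using assms ideal_sub by force
  ultimately show ?thesis using down_cl1 True by blast
next
  case False
  then show ?thesis using walk_left assms by blast
qed

lemma unique_rem_down: assumes "ideal b M I" "rem b M I p" "\<And>p'. rem b M I p' \<Longrightarrow> p' = p"
  shows "I = down b M p"
proof
  have "p \<in> I" using assms(2) by (simp add: rem_def)
  then show "down b M p \<subseteq> I" using down_least assms(1) by blast
  show "I \<subseteq> down b M p" using walk[OF assms(1)] assms(3) by blast
qed

lemma down_inj: "1 \<le> p \<Longrightarrow> p \<le> M \<Longrightarrow> 1 \<le> q \<Longrightarrow> q \<le> M \<Longrightarrow> down b M p = down b M q \<Longrightarrow> p = q"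
proof -
  assume a: "1 \<le> p" "p \<le> M" "1 \<le> q" "q \<le> M" "down b M p = down b M q"
  have "rem b M (down b M p) p" using rem_down[OF a(1,2)] by simp
  then have "rem b M (down b M q) p" using a(5) by simp
  then show "p = q" using rem_down[OF a(3,4)] by simp
qed

definition arc0 :: "(nat \<Rightarrow> bool) \<Rightarrow> nat \<Rightarrow> nat set \<Rightarrow> nat set \<Rightarrow> bool" where
"arc0 b M I J \<longleftrightarrow> ideal b M I \<and> ideal b M J \<and> (\<exists>p\<in>I. J = I - {p})"

lemma arc0_rem: "arc0 b M I J \<longleftrightarrow> ideal b M I \<and> (\<exists>p. rem b M I p \<and> J = I - {p})"
  by (auto simp: arc0_def rem_def)

lemma reach_sub: "(arc0 b M)\<^sup>*\<^sup>* I J \<Longrightarrow> J \<subseteq> I"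
  by (induction rule: rtranclp_induct) (auto simp: arc0_def)

lemma sub_reach: "ideal b M I \<Longrightarrow> ideal b M J \<Longrightarrow> J \<subseteq> I \<Longrightarrow> (arc0 b M)\<^sup>*\<^sup>* I J"
proof (induction "card (I - J)" arbitrary: I rule: less_induct)
  case less
  show ?case
  proof (cases "I = J")
    case True then show ?thesis by simp
  next
    case False
    then obtain q where q: "q \<in> I" "q \<notin> J" using less.prems by blast
    then obtain m where m: "rem b M I m" "q \<in> down b M m" using walk[OF less.prems(1)] by blast
    have "m \<notin> J" using down_least[OF less.prems(2)] m q by blast
    have fin: "finite I" using ideal_sub[OF less.prems(1)] finite_subset by blast
    have mI: "m \<in> I" using m by (simp add: rem_def)
    have "card (I - {m} - J) < card (I - J)"
    proof (rule psubset_card_mono)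
      show "finite (I - J)" using fin by simp
      show "I - {m} - J \<subset> I - J" using mI \<open>m \<notin> J\<close> by blast
    qed
    moreover have "ideal b M (I - {m})" using m by (simp add: rem_def)
    moreover have "J \<subseteq> I - {m}" using less.prems \<open>m \<notin> J\<close> by blast
    ultimately have "(arc0 b M)\<^sup>*\<^sup>* (I - {m}) J" using less.hyps[of "I - {m}"] less.prems(2) by simp
    moreover have "arc0 b M I (I - {m})" using m less.prems by (auto simp: arc0_rem)
    ultimately show ?thesis by (meson converse_rtranclp_into_rtranclp)
  qed
qed

definition adjo :: "(nat \<Rightarrow> bool) \<Rightarrow> nat \<Rightarrow> nat \<Rightarrow> nat \<Rightarrow> bool" where
"adjo b M p q \<longleftrightarrow> p \<noteq> q \<and> (q \<in> down b M p \<or> p \<in> down b M q) \<and>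
   \<not> (\<exists>r. 1 \<le> r \<and> r \<le> M \<and> r \<noteq> p \<and> r \<noteq> q \<and>
      ((q \<in> down b M r \<and> r \<in> down b M p) \<or> (p \<in> down b M r \<and> r \<in> down b M q)))"

lemma adj_nb1: "1 \<le> p \<Longrightarrow> Suc p \<le> M \<Longrightarrow> r \<noteq> p \<Longrightarrow> r \<noteq> Suc p \<Longrightarrow>
   \<not> (Suc p \<in> down b M r \<and> r \<in> down b M p)"
proof
  assume a: "1 \<le> p" "Suc p \<le> M" "r \<noteq> p" "r \<noteq> Suc p" and h: "Suc p \<in> down b M r \<and> r \<in> down b M p"
  show False
  proof (cases "r < p")
    case True
    then have "b r" using h by (auto simp: down_def)
    moreover have "\<not> b r" using h True by (auto simp: down_def)
    ultimately show False by simp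
  next
    case False
    then have "Suc p < r" using a by simp
    then have "\<not> b (Suc p)" using h by (auto simp: down_def)
    moreover have "b (Suc p)" using h \<open>Suc p < r\<close> by (auto simp: down_def)
    ultimately show False by simp
  qed
qed

lemma adj_nb2: "1 \<le> p \<Longrightarrow> Suc p \<le> M \<Longrightarrow> r \<noteq> p \<Longrightarrow> r \<noteq> Suc p \<Longrightarrow>
   \<not> (p \<in> down b M r \<and> r \<in> down b M (Suc p))"
proof
  assume a: "1 \<le> p" "Suc p \<le> M" "r \<noteq> p" "r \<noteq> Suc p" and h: "p \<in> down b M r \<and> r \<in> down b M (Suc p)"
  show False
  proof (cases "r < p")
    case True
    then have "b r" using h by (auto simp: down_def)
    moreover have "\<not> b r" using h True by (auto simp: down_def)
    ultimately show False by simp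
  next
    case False
    then have "Suc p < r" using a by simp
    then have "\<not> b (Suc p)" using h by (auto simp: down_def)
    moreover have "b (Suc p)" using h \<open>Suc p < r\<close> by (auto simp: down_def)
    ultimately show False by simp
  qed
qed

lemma adjo_sym: "adjo b M p q \<longleftrightarrow> adjo b M q p"
  unfolding adjo_def by blast

lemma between: assumes "q \<in> down b M p" "1 \<le> p" "p \<le> M" "q \<noteq> p" "q \<noteq> Suc p" "p \<noteq> Suc q"
  shows "\<exists>r. 1 \<le> r \<and> r \<le> M \<and> r \<noteq> p \<and> r \<noteq> q \<and> q \<in> down b M r \<and> r \<in> down b M p"
proof (cases "q < p")
  case True
  have h: "1 \<le> q" "\<forall>r. q \<le> r \<and> r < p \<longrightarrow> b r" using assms True by (auto simp: down_def)
  have "q \<in> down b M (Suc q)" "Suc q \<in> down b M p" using h True assms by (auto simp: down_def)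
  then show ?thesis using True assms h by (intro exI[of _ "Suc q"]) auto
next
  case False
  then have pq: "Suc p < q" using assms by simp
  then obtain r where r: "q = Suc r" by (cases q) auto
  have h: "q \<le> M" "\<forall>x. p \<le> x \<and> x < q \<longrightarrow> \<not> b x" using assms pq by (auto simp: down_def)
  have "q \<in> down b M r" "r \<in> down b M p" using h pq r assms by (auto simp: down_def)
  then show ?thesis using pq r assms h by (intro exI[of _ r]) auto
qed

lemma adj_iff: assumes "1 \<le> p" "p \<le> M" "1 \<le> q" "q \<le> M"
  shows "adjo b M p q \<longleftrightarrow> (q = Suc p \<or> p = Suc q)"
proof
  assume a: "adjo b M p q"
  show "q = Suc p \<or> p = Suc q"
  proof (rule ccontr)
    assume n: "\<not> (q = Suc p \<or> p = Suc q)"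
    have "p \<noteq> q" using a by (simp add: adjo_def)
    have "q \<in> down b M p \<or> p \<in> down b M q" using a by (simp add: adjo_def)
    then show False
    proof
      assume "q \<in> down b M p"
      then obtain r where "1 \<le> r \<and> r \<le> M \<and> r \<noteq> p \<and> r \<noteq> q \<and> q \<in> down b M r \<and> r \<in> down b M p"
        using between assms n \<open>p \<noteq> q\<close> by metis
      then show False using a by (auto simp: adjo_def)
    next
      assume "p \<in> down b M q"
      then obtain r where "1 \<le> r \<and> r \<le> M \<and> r \<noteq> p \<and> r \<noteq> q \<and> p \<in> down b M r \<and> r \<in> down b M q"
        using between[of p b M q] assms n \<open>p \<noteq> q\<close> by metis
      then show False using a by (auto simp: adjo_def)
    qed
  qed
next
  have main: "adjo b M x (Suc x)" if "1 \<le> x" "Suc x \<le> M" for x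
  proof -
    have "Suc x \<in> down b M x \<or> x \<in> down b M (Suc x)"
    proof (cases "b x")
      case True
      then have "x \<in> down b M (Suc x)" using that by (auto simp: down_def less_Suc_eq)
      then show ?thesis by blast
    next
      case False
      then have "Suc x \<in> down b M x" using that by (auto simp: down_def less_Suc_eq)
      then show ?thesis by blast
    qed
    then show ?thesis unfolding adjo_def using adj_nb1[OF that] adj_nb2[OF that] by auto
  qed
  assume "q = Suc p \<or> p = Suc q"
  then show "adjo b M p q" using main assms adjo_sym by metis
qed

lemma path_id:
  assumes bij: "bij_betw \<sigma> {1..M} {1..M}"
    and adj: "\<And>p q. p \<in> {1..M} \<Longrightarrow> q \<in> {1..M} \<Longrightarrow>
       (q = Suc p \<or> p = Suc q) \<longleftrightarrow> (\<sigma> q = Suc (\<sigma> p) \<or> \<sigma> p = Suc (\<sigma> q))"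
    and s1: "\<sigma> 1 = 1"
  shows "p \<in> {1..M} \<Longrightarrow> \<sigma> p = p"
proof (induction p rule: less_induct)
  case (less p)
  show ?case
  proof (cases "p = 1")
    case True then show ?thesis using s1 by simp
  next
    case False
    then obtain p' where p': "p = Suc p'" "1 \<le> p'" using less.prems by (cases p) auto
    have p'M: "p' \<in> {1..M}" using p' less.prems by auto
    have ih: "\<sigma> p' = p'" using less.IH[of p'] p' p'M by simp
    have "\<sigma> p = Suc (\<sigma> p') \<or> \<sigma> p' = Suc (\<sigma> p)" using adj[OF p'M less.prems] p' by simp
    moreover have "\<sigma> p \<in> {1..M}" using bij less.prems bij_betwE by blast
    moreover
    { assume h: "\<sigma> p' = Suc (\<sigma> p)"
      then obtain p'' where p'': "p' = Suc p''" "1 \<le> p''" using ih \<open>\<sigma> p \<in> {1..M}\<close> by (cases p') auto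
      have "\<sigma> p'' = p''" using less.IH[of p''] p'' p' less.prems by simp
      then have "\<sigma> p = \<sigma> p''" using h ih p'' by simp
      moreover have "p'' \<in> {1..M}" using p'' p' less.prems by auto
      ultimately have "p = p''" using bij less.prems bij_betw_imp_inj_on inj_onD by metis
      then have False using p' p'' by simp }
    ultimately show ?thesis using ih p' by auto
  qed
qed

lemma path_end:
  assumes bij: "bij_betw \<sigma> {1..M} {1..M}"
    and adj: "\<And>p q. p \<in> {1..M} \<Longrightarrow> q \<in> {1..M} \<Longrightarrow>
       (q = Suc p \<or> p = Suc q) \<longleftrightarrow> (\<sigma> q = Suc (\<sigma> p) \<or> \<sigma> p = Suc (\<sigma> q))"
    and M: "1 \<le> M"
  shows "\<sigma> 1 = 1 \<or> \<sigma> 1 = M"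
proof (rule ccontr)
  assume n: "\<not> (\<sigma> 1 = 1 \<or> \<sigma> 1 = M)"
  have one: "1 \<in> {1..M}" using M by simp
  have r: "\<sigma> 1 \<in> {1..M}" using bij one bij_betwE by blast
  have im: "\<sigma> ` {1..M} = {1..M}" using bij bij_betw_imp_surj_on by blast
  have "\<sigma> 1 - 1 \<in> {1..M}" using r n by auto
  then obtain a where a: "a \<in> {1..M}" "\<sigma> a = \<sigma> 1 - 1" using im by (metis imageE)
  have "Suc (\<sigma> 1) \<in> {1..M}" using r n by auto
  then obtain c where c: "c \<in> {1..M}" "\<sigma> c = Suc (\<sigma> 1)" using im by (metis imageE)
  have "a = Suc 1 \<or> 1 = Suc a" using adj[OF one a(1)] a r n by auto
  then have "a = 2" using a by auto
  have "c = Suc 1 \<or> 1 = Suc c" using adj[OF one c(1)] c by auto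
  then have "c = 2" using c by auto
  then show False using a c \<open>a = 2\<close> by simp
qed

lemma path_cases:
  assumes bij: "bij_betw \<sigma> {1..M} {1..M'}"
    and adj: "\<And>p q. p \<in> {1..M} \<Longrightarrow> q \<in> {1..M} \<Longrightarrow>
       (q = Suc p \<or> p = Suc q) \<longleftrightarrow> (\<sigma> q = Suc (\<sigma> p) \<or> \<sigma> p = Suc (\<sigma> q))"
    and M: "1 \<le> M"
  shows "M = M' \<and> ((\<forall>p\<in>{1..M}. \<sigma> p = p) \<or> (\<forall>p\<in>{1..M}. \<sigma> p = Suc M - p))"
proof -
  have "card {1..M} = card {1..M'}" using bij bij_betw_same_card by blast
  then have MM: "M = M'" by simp
  then have bij': "bij_betw \<sigma> {1..M} {1..M}" using bij by simp
  have "\<sigma> 1 = 1 \<or> \<sigma> 1 = M" using path_end[OF bij' adj M] by blast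
  then show ?thesis
  proof
    assume "\<sigma> 1 = 1"
    then show ?thesis using path_id[OF bij' adj] MM by blast
  next
    assume s1: "\<sigma> 1 = M"
    define \<tau> where "\<tau> = (\<lambda>x. Suc M - x) \<circ> \<sigma>"
    have rb: "bij_betw (\<lambda>x. Suc M - x) {1..M} {1..M}"
      by (rule bij_betw_byWitness[where f'="\<lambda>x. Suc M - x"]) auto
    have bt: "bij_betw \<tau> {1..M} {1..M}" unfolding \<tau>_def by (rule bij_betw_trans[OF bij' rb])
    have rng: "\<sigma> x \<in> {1..M}" if "x \<in> {1..M}" for x using bij' that bij_betwE by blast
    have adj': "(q = Suc p \<or> p = Suc q) \<longleftrightarrow> (\<tau> q = Suc (\<tau> p) \<or> \<tau> p = Suc (\<tau> q))"
      if "p \<in> {1..M}" "q \<in> {1..M}" for p q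
    proof -
      have ar: "(Suc M - y = Suc (Suc M - x)) \<longleftrightarrow> x = Suc y" if "x \<in> {1..M}" "y \<in> {1..M}" for x y
        using that by auto
      show ?thesis using adj[OF that] ar[OF rng[OF that(1)] rng[OF that(2)]] ar[OF rng[OF that(2)] rng[OF that(1)]]
        unfolding \<tau>_def by auto
    qed
    have "\<tau> 1 = 1" unfolding \<tau>_def using s1 by simp
    then have "\<forall>p\<in>{1..M}. \<tau> p = p" using path_id[OF bt adj'] by blast
    then have "\<forall>p\<in>{1..M}. \<sigma> p = Suc M - p"
    proof (intro ballI)
      fix p assume p: "p \<in> {1..M}" and "\<forall>p\<in>{1..M}. \<tau> p = p"
      then have "Suc M - \<sigma> p = p" unfolding \<tau>_def by simp
      then show "\<sigma> p = Suc M - p" using rng[OF p] by auto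
    qed
    then show ?thesis using MM by blast
  qed
qed

lemma adjo_transfer:
  assumes bij: "bij_betw \<sigma> {1..M} {1..M'}"
    and ord: "\<forall>p\<in>{1..M}. \<forall>q\<in>{1..M}. q \<in> down b M p \<longleftrightarrow> \<sigma> q \<in> down b' M' (\<sigma> p)"
    and p: "p \<in> {1..M}" and q: "q \<in> {1..M}"
  shows "adjo b M p q \<longleftrightarrow> adjo b' M' (\<sigma> p) (\<sigma> q)"
proof -
  have inj: "inj_on \<sigma> {1..M}" using bij bij_betw_imp_inj_on by blast
  have im: "\<sigma> ` {1..M} = {1..M'}" using bij bij_betw_imp_surj_on by blast
  have e1: "(p \<noteq> q) \<longleftrightarrow> (\<sigma> p \<noteq> \<sigma> q)" using inj p q inj_on_eq_iff by metis
  have e2: "(q \<in> down b M p \<or> p \<in> down b M q) \<longleftrightarrow> (\<sigma> q \<in> down b' M' (\<sigma> p) \<or> \<sigma> p \<in> down b' M' (\<sigma> q))"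
    using ord p q by blast
  have e3: "(\<exists>r. 1 \<le> r \<and> r \<le> M \<and> r \<noteq> p \<and> r \<noteq> q \<and>
      ((q \<in> down b M r \<and> r \<in> down b M p) \<or> (p \<in> down b M r \<and> r \<in> down b M q))) \<longleftrightarrow>
    (\<exists>r. 1 \<le> r \<and> r \<le> M' \<and> r \<noteq> \<sigma> p \<and> r \<noteq> \<sigma> q \<and>
      ((\<sigma> q \<in> down b' M' r \<and> r \<in> down b' M' (\<sigma> p)) \<or> (\<sigma> p \<in> down b' M' r \<and> r \<in> down b' M' (\<sigma> q))))"
  proof
    assume "\<exists>r. 1 \<le> r \<and> r \<le> M \<and> r \<noteq> p \<and> r \<noteq> q \<and>
      ((q \<in> down b M r \<and> r \<in> down b M p) \<or> (p \<in> down b M r \<and> r \<in> down b M q))"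
    then obtain r where r: "r \<in> {1..M}" "r \<noteq> p" "r \<noteq> q"
      "(q \<in> down b M r \<and> r \<in> down b M p) \<or> (p \<in> down b M r \<and> r \<in> down b M q)" by auto
    have "\<sigma> r \<in> {1..M'}" using r(1) im by blast
    moreover have "\<sigma> r \<noteq> \<sigma> p" "\<sigma> r \<noteq> \<sigma> q" using inj r p q inj_on_eq_iff by metis+
    moreover have "(\<sigma> q \<in> down b' M' (\<sigma> r) \<and> \<sigma> r \<in> down b' M' (\<sigma> p)) \<or> (\<sigma> p \<in> down b' M' (\<sigma> r) \<and> \<sigma> r \<in> down b' M' (\<sigma> q))"
      using r(4) ord r(1) p q by blast
    ultimately show "\<exists>r. 1 \<le> r \<and> r \<le> M' \<and> r \<noteq> \<sigma> p \<and> r \<noteq> \<sigma> q \<and>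
      ((\<sigma> q \<in> down b' M' r \<and> r \<in> down b' M' (\<sigma> p)) \<or> (\<sigma> p \<in> down b' M' r \<and> r \<in> down b' M' (\<sigma> q)))"
      by (intro exI[of _ "\<sigma> r"]) auto
  next
    assume "\<exists>r. 1 \<le> r \<and> r \<le> M' \<and> r \<noteq> \<sigma> p \<and> r \<noteq> \<sigma> q \<and>
      ((\<sigma> q \<in> down b' M' r \<and> r \<in> down b' M' (\<sigma> p)) \<or> (\<sigma> p \<in> down b' M' r \<and> r \<in> down b' M' (\<sigma> q)))"
    then obtain r' where r': "r' \<in> {1..M'}" "r' \<noteq> \<sigma> p" "r' \<noteq> \<sigma> q"
      "(\<sigma> q \<in> down b' M' r' \<and> r' \<in> down b' M' (\<sigma> p)) \<or> (\<sigma> p \<in> down b' M' r' \<and> r' \<in> down b' M' (\<sigma> q))" by auto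
    obtain r where r: "r \<in> {1..M}" "\<sigma> r = r'" using r'(1) im by (metis imageE)
    have "r \<noteq> p" "r \<noteq> q" using r r' by auto
    moreover have "(q \<in> down b M r \<and> r \<in> down b M p) \<or> (p \<in> down b M r \<and> r \<in> down b M q)"
      using r'(4) ord r(1) p q r(2) by blast
    ultimately show "\<exists>r. 1 \<le> r \<and> r \<le> M \<and> r \<noteq> p \<and> r \<noteq> q \<and>
      ((q \<in> down b M r \<and> r \<in> down b M p) \<or> (p \<in> down b M r \<and> r \<in> down b M q))"
      using r(1) by (intro exI[of _ r]) auto
  qed
  show ?thesis unfolding adjo_def using e1 e2 e3 by blast
qed

lemma sigma_recover:
  assumes bij: "bij_betw \<sigma> {1..M} {1..M'}"
    and lab: "\<forall>p\<in>{1..M}. b' (\<sigma> p) = b p"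
    and ord: "\<forall>p\<in>{1..M}. \<forall>q\<in>{1..M}. q \<in> down b M p \<longleftrightarrow> \<sigma> q \<in> down b' M' (\<sigma> p)"
    and M: "1 \<le> M" and bM: "b M" and bM': "b' M'"
  shows "M = M' \<and> (\<forall>p\<in>{1..M}. b' p = b p)"
proof -
  have rng: "\<sigma> x \<in> {1..M'}" if "x \<in> {1..M}" for x using bij that bij_betwE by blast
  have adj: "(q = Suc p \<or> p = Suc q) \<longleftrightarrow> (\<sigma> q = Suc (\<sigma> p) \<or> \<sigma> p = Suc (\<sigma> q))"
    if p: "p \<in> {1..M}" and q: "q \<in> {1..M}" for p q
  proof -
    have "(q = Suc p \<or> p = Suc q) \<longleftrightarrow> adjo b M p q" using adj_iff p q by auto
    also have "\<dots> \<longleftrightarrow> adjo b' M' (\<sigma> p) (\<sigma> q)" using adjo_transfer[OF bij ord p q] .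
    also have "\<dots> \<longleftrightarrow> (\<sigma> q = Suc (\<sigma> p) \<or> \<sigma> p = Suc (\<sigma> q))" using adj_iff rng[OF p] rng[OF q] by auto
    finally show ?thesis .
  qed
  have pc: "M = M' \<and> ((\<forall>p\<in>{1..M}. \<sigma> p = p) \<or> (\<forall>p\<in>{1..M}. \<sigma> p = Suc M - p))"
    using path_cases[OF bij adj M] by blast
  then have MM: "M = M'" by simp
  show ?thesis
  proof (cases "\<forall>p\<in>{1..M}. \<sigma> p = p")
    case True
    then show ?thesis using lab MM by auto
  next
    case False
    then have rv: "\<forall>p\<in>{1..M}. \<sigma> p = Suc M - p" using pc by blast
    have alt: "b p \<longleftrightarrow> \<not> b (Suc p)" if p: "1 \<le> p" "p < M" for p
    proof -
      have pM: "p \<in> {1..M}" "Suc p \<in> {1..M}" using p by auto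
      have "p \<in> down b M (Suc p) \<longleftrightarrow> b p" using p by (auto simp: down_def less_Suc_eq)
      moreover have "p \<in> down b M (Suc p) \<longleftrightarrow> \<sigma> p \<in> down b' M' (\<sigma> (Suc p))" using ord pM by blast
      moreover have "\<sigma> p = Suc (M - p)" "\<sigma> (Suc p) = M - p" using rv pM p by auto
      moreover have "Suc (M - p) \<in> down b' M' (M - p) \<longleftrightarrow> \<not> b' (M - p)"
        using p MM by (auto simp: down_def less_Suc_eq)
      moreover have "b' (M - p) = b (Suc p)" using lab pM rv by (metis diff_Suc_Suc)
      ultimately show ?thesis by simp
    qed
    have ev: "b p \<longleftrightarrow> even (M - p)" if "p \<in> {1..M}" for p
      using that
    proof (induction "M - p" arbitrary: p)
      case 0 then show ?case using bM by simp
    next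
      case (Suc d)
      then have "1 \<le> p" "p < M" by auto
      then have "b p \<longleftrightarrow> \<not> b (Suc p)" using alt by blast
      moreover have "b (Suc p) \<longleftrightarrow> even (M - Suc p)" using Suc \<open>p < M\<close> by auto
      moreover have "M - p = Suc (M - Suc p)" using \<open>p < M\<close> by simp
      ultimately show ?case by (simp only:) simp
    qed
    have "b 1" using lab rv bM' MM M by (metis atLeastAtMost_iff diff_Suc_1 le_refl)
    then have em: "even (M - 1)" using ev M by auto
    show ?thesis
    proof (intro conjI ballI)
      show "M = M'" by fact
    next
      fix p assume p: "p \<in> {1..M}"
      have q: "Suc M - p \<in> {1..M}" using p by auto
      have "b' p = b' (\<sigma> (Suc M - p))" using rv q p by auto
      also have "\<dots> = b (Suc M - p)" using lab q by blast
      also have "\<dots> \<longleftrightarrow> even (M - (Suc M - p))" using ev q by blast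
      also have "\<dots> \<longleftrightarrow> even (M - p)" using em p by (auto elim!: evenE oddE)
      also have "\<dots> \<longleftrightarrow> b p" using ev p by blast
      finally show "b' p = b p" .
    qed
  qed
qed

definition marc :: "(nat \<Rightarrow> bool) \<Rightarrow> nat set \<Rightarrow> nat set \<Rightarrow> bool \<Rightarrow> bool" where
"marc b I J l \<longleftrightarrow> (\<exists>p\<in>I. J = I - {p} \<and> b p = l)"

definition miso :: "(nat \<Rightarrow> bool) \<Rightarrow> nat \<Rightarrow> (nat \<Rightarrow> bool) \<Rightarrow> nat \<Rightarrow> (nat set \<Rightarrow> nat set) \<Rightarrow> bool" where
"miso b M b' M' \<Psi> \<longleftrightarrow> bij_betw \<Psi> {I. ideal b M I} {I. ideal b' M' I} \<and>
   (\<forall>I J l. ideal b M I \<longrightarrow> ideal b M J \<longrightarrow> (marc b I J l \<longleftrightarrow> marc b' (\<Psi> I) (\<Psi> J) l))"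

lemma arc0_marc: "arc0 b M I J \<longleftrightarrow> ideal b M I \<and> ideal b M J \<and> (\<exists>l. marc b I J l)"
  by (auto simp: arc0_def marc_def)

lemma miso_inv: assumes "miso b M b' M' \<Psi>"
  shows "miso b' M' b M (inv_into {I. ideal b M I} \<Psi>)"
proof -
  let ?g = "inv_into {I. ideal b M I} \<Psi>"
  have bij: "bij_betw \<Psi> {I. ideal b M I} {I. ideal b' M' I}" using assms by (simp add: miso_def)
  have bg: "bij_betw ?g {I. ideal b' M' I} {I. ideal b M I}" using bij bij_betw_inv_into by blast
  have gi: "\<Psi> (?g I) = I" if "ideal b' M' I" for I
    using bij that by (simp add: bij_betw_inv_into_right)
  have gI: "ideal b M (?g I)" if "ideal b' M' I" for I using bg that bij_betwE by blast
  show ?thesis unfolding miso_def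
  proof (intro conjI allI impI)
    show "bij_betw ?g {I. ideal b' M' I} {I. ideal b M I}" by fact
  next
    fix I J l assume "ideal b' M' I" "ideal b' M' J"
    then show "marc b' I J l \<longleftrightarrow> marc b (?g I) (?g J) l"
      using assms gi gI unfolding miso_def by metis
  qed
qed

lemma miso_marc: "miso b M b' M' \<Psi> \<Longrightarrow> ideal b M I \<Longrightarrow> ideal b M J \<Longrightarrow> marc b I J l \<Longrightarrow> marc b' (\<Psi> I) (\<Psi> J) l"
  unfolding miso_def by blast

lemma miso_ideal: "miso b M b' M' \<Psi> \<Longrightarrow> ideal b M I \<Longrightarrow> ideal b' M' (\<Psi> I)"
  unfolding miso_def using bij_betwE by blast

lemma miso_arc0: assumes "miso b M b' M' \<Psi>" "arc0 b M I J" shows "arc0 b' M' (\<Psi> I) (\<Psi> J)"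
  using assms miso_ideal unfolding arc0_marc miso_def by blast

lemma rt_map: assumes "\<And>x y. R x y \<Longrightarrow> R' (f x) (f y)" "R\<^sup>*\<^sup>* x y" shows "R'\<^sup>*\<^sup>* (f x) (f y)"
  using assms(2) by (induction rule: rtranclp_induct) (auto intro: rtranclp.rtrancl_into_rtrancl assms(1))

lemma miso_sub1: assumes "miso b M b' M' \<Psi>" "ideal b M I" "ideal b M J" "J \<subseteq> I"
  shows "\<Psi> J \<subseteq> \<Psi> I"
proof -
  have "(arc0 b M)\<^sup>*\<^sup>* I J" using sub_reach assms by blast
  then have "(arc0 b' M')\<^sup>*\<^sup>* (\<Psi> I) (\<Psi> J)" using rt_map[of "arc0 b M" "arc0 b' M'" \<Psi>] miso_arc0[OF assms(1)] by blast
  then show ?thesis using reach_sub by blast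
qed

lemma miso_sub: assumes "miso b M b' M' \<Psi>" "ideal b M I" "ideal b M J"
  shows "J \<subseteq> I \<longleftrightarrow> \<Psi> J \<subseteq> \<Psi> I"
proof
  assume "J \<subseteq> I" then show "\<Psi> J \<subseteq> \<Psi> I" using miso_sub1 assms by blast
next
  let ?g = "inv_into {I. ideal b M I} \<Psi>"
  have bij: "bij_betw \<Psi> {I. ideal b M I} {I. ideal b' M' I}" using assms by (simp add: miso_def)
  assume "\<Psi> J \<subseteq> \<Psi> I"
  then have "?g (\<Psi> J) \<subseteq> ?g (\<Psi> I)"
    using miso_sub1[OF miso_inv[OF assms(1)]] miso_ideal[OF assms(1)] assms(2,3) by blast
  moreover have "?g (\<Psi> J) = J" "?g (\<Psi> I) = I" using bij assms(2,3) bij_betw_inv_into_left by fastforce+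
  ultimately show "J \<subseteq> I" by simp
qed

lemma uniq_arc0_rem: assumes "ideal b M I" shows "(\<exists>!J. arc0 b M I J) \<longleftrightarrow> (\<exists>!p. rem b M I p)"
proof
  assume "\<exists>!J. arc0 b M I J"
  then obtain J where J: "arc0 b M I J" "\<And>J'. arc0 b M I J' \<Longrightarrow> J' = J" by blast
  from J(1) obtain p where p: "rem b M I p" "J = I - {p}" unfolding arc0_rem by blast
  have "p' = p" if "rem b M I p'" for p'
  proof (rule ccontr)
    assume ne: "p' \<noteq> p"
    have "arc0 b M I (I - {p'})" using that assms by (auto simp: arc0_rem)
    then have eq: "I - {p'} = I - {p}" using J(2) p(2) by simp
    have "p' \<in> I" using that by (simp add: rem_def)
    then have "p' \<in> I - {p}" using ne by simp
    then show False using eq by blast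
  qed
  then show "\<exists>!p. rem b M I p" using p(1) by (intro ex1I)
next
  assume "\<exists>!p. rem b M I p"
  then obtain p where p: "rem b M I p" "\<And>p'. rem b M I p' \<Longrightarrow> p' = p" by blast
  have a: "arc0 b M I (I - {p})" using p(1) assms by (auto simp: arc0_rem)
  have "J = I - {p}" if "arc0 b M I J" for J
  proof -
    from that obtain p' where "rem b M I p'" "J = I - {p'}" unfolding arc0_rem by blast
    then show ?thesis using p(2) by simp
  qed
  then show "\<exists>!J. arc0 b M I J" using a by (intro ex1I)
qed

lemma jirr: assumes "ideal b M I" shows "(\<exists>!J. arc0 b M I J) \<longleftrightarrow> (\<exists>p\<in>{1..M}. I = down b M p)"
proof
  assume "\<exists>!J. arc0 b M I J"
  then obtain p where p: "rem b M I p" "\<And>p'. rem b M I p' \<Longrightarrow> p' = p" using uniq_arc0_rem[OF assms] by blast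
  have "I = down b M p" using unique_rem_down[OF assms p(1) p(2)] by blast
  moreover have "p \<in> I" using p(1) by (simp add: rem_def)
  then have "p \<in> {1..M}" using assms ideal_sub by blast
  ultimately show "\<exists>p\<in>{1..M}. I = down b M p" by blast
next
  assume "\<exists>p\<in>{1..M}. I = down b M p"
  then obtain p where pp: "p \<in> {1..M}" "I = down b M p" by blast
  have "\<exists>!p'. rem b M I p'" unfolding pp(2) using rem_down[of p M b] pp(1) by auto
  then show "\<exists>!J. arc0 b M I J" using uniq_arc0_rem[OF assms] by blast
qed

lemma miso_uniq1: assumes "miso b M b' M' \<Psi>" "ideal b M I" "\<exists>!J. arc0 b M I J"
  shows "\<exists>!J. arc0 b' M' (\<Psi> I) J"
proof -
  let ?g = "inv_into {I. ideal b M I} \<Psi>"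
  have bij: "bij_betw \<Psi> {I. ideal b M I} {I. ideal b' M' I}" using assms by (simp add: miso_def)
  obtain J where J: "arc0 b M I J" "\<And>J'. arc0 b M I J' \<Longrightarrow> J' = J" using assms(3) by blast
  have "arc0 b' M' (\<Psi> I) (\<Psi> J)" using miso_arc0[OF assms(1) J(1)] .
  moreover have "J' = \<Psi> J" if "arc0 b' M' (\<Psi> I) J'" for J'
  proof -
    have "arc0 b M (?g (\<Psi> I)) (?g J')" using miso_arc0[OF miso_inv[OF assms(1)] that] .
    moreover have "?g (\<Psi> I) = I" using bij assms(2) bij_betw_inv_into_left by fastforce
    ultimately have "?g J' = J" using J by simp
    moreover have "ideal b' M' J'" using that by (simp add: arc0_def)
    ultimately show "J' = \<Psi> J" using bij bij_betw_inv_into_right by fastforce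
  qed
  ultimately show ?thesis by blast
qed

lemma down_mem_sub: "1 \<le> q \<Longrightarrow> q \<le> M \<Longrightarrow> q \<in> down b M p \<longleftrightarrow> down b M q \<subseteq> down b M p"
  using down_least[OF down_ideal] down_self by blast

theorem model_recover:
  assumes iso: "miso b M b' M' \<Psi>" and M: "1 \<le> M" "1 \<le> M'" and bM: "b M" "b' M'"
  shows "M = M' \<and> (\<forall>p\<in>{1..M}. b' p = b p)"
proof -
  let ?g = "inv_into {I. ideal b M I} \<Psi>"
  have bij: "bij_betw \<Psi> {I. ideal b M I} {I. ideal b' M' I}" using iso by (simp add: miso_def)
  have inj: "inj_on \<Psi> {I. ideal b M I}" using bij bij_betw_imp_inj_on by blast
  have ex: "\<exists>q. q \<in> {1..M'} \<and> \<Psi> (down b M p) = down b' M' q" if p: "p \<in> {1..M}" for p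
  proof -
    have "\<exists>!J. arc0 b M (down b M p) J" using jirr[OF down_ideal, of b M p] p by blast
    then have "\<exists>!J. arc0 b' M' (\<Psi> (down b M p)) J" by (rule miso_uniq1[OF iso down_ideal])
    then have "\<exists>q\<in>{1..M'}. \<Psi> (down b M p) = down b' M' q" by (rule iffD1[OF jirr[OF miso_ideal[OF iso down_ideal]]])
    then show ?thesis by blast
  qed
  define \<sigma> where "\<sigma> p = (SOME q. q \<in> {1..M'} \<and> \<Psi> (down b M p) = down b' M' q)" for p
  have sp: "\<sigma> p \<in> {1..M'} \<and> \<Psi> (down b M p) = down b' M' (\<sigma> p)" if "p \<in> {1..M}" for p
    unfolding \<sigma>_def using someI_ex[OF ex[OF that]] .
  have sinj: "inj_on \<sigma> {1..M}"
  proof (rule inj_onI)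
    fix p p' assume pp: "p \<in> {1..M}" "p' \<in> {1..M}" "\<sigma> p = \<sigma> p'"
    then have "\<Psi> (down b M p) = \<Psi> (down b M p')" using sp[OF pp(1)] sp[OF pp(2)] by simp
    then have "down b M p = down b M p'" using inj_onD[OF inj] down_ideal by blast
    then show "p = p'" using down_inj pp by auto
  qed
  have sim: "\<sigma> ` {1..M} = {1..M'}"
  proof
    show "\<sigma> ` {1..M} \<subseteq> {1..M'}" using sp by blast
  next
    show "{1..M'} \<subseteq> \<sigma> ` {1..M}"
    proof
      fix q assume q: "q \<in> {1..M'}"
      have iso': "miso b' M' b M ?g" using miso_inv[OF iso] .
      have "\<exists>!J. arc0 b' M' (down b' M' q) J" using jirr[OF down_ideal, of b' M' q] q by blast
      then have "\<exists>!J. arc0 b M (?g (down b' M' q)) J" by (rule miso_uniq1[OF iso' down_ideal])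
      then have "\<exists>p\<in>{1..M}. ?g (down b' M' q) = down b M p"
        by (rule iffD1[OF jirr[OF miso_ideal[OF iso' down_ideal]]])
      then obtain p where p: "p \<in> {1..M}" "?g (down b' M' q) = down b M p" by blast
      have "\<Psi> (?g (down b' M' q)) = down b' M' q"
        using bij bij_betw_inv_into_right down_ideal by fastforce
      then have "down b' M' q = down b' M' (\<sigma> p)" using p(2) sp[OF p(1)] by simp
      then have "q = \<sigma> p" using down_inj q sp[OF p(1)] by auto
      then show "q \<in> \<sigma> ` {1..M}" using p by blast
    qed
  qed
  have sbij: "bij_betw \<sigma> {1..M} {1..M'}" using sinj sim by (simp add: bij_betw_def)
  have lab: "\<forall>p\<in>{1..M}. b' (\<sigma> p) = b p"
  proof
    fix p assume p: "p \<in> {1..M}"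
    have r: "rem b M (down b M p) p" using rem_down p by auto
    then have D: "ideal b M (down b M p - {p})" by (simp add: rem_def)
    have "marc b (down b M p) (down b M p - {p}) (b p)" using r by (auto simp: marc_def rem_def)
    then have "marc b' (\<Psi> (down b M p)) (\<Psi> (down b M p - {p})) (b p)"
      by (rule miso_marc[OF iso down_ideal D])
    then obtain p' where p': "p' \<in> down b' M' (\<sigma> p)" "\<Psi> (down b M p - {p}) = down b' M' (\<sigma> p) - {p'}" "b' p' = b p"
      using sp[OF p] unfolding marc_def by auto
    have "ideal b' M' (down b' M' (\<sigma> p) - {p'})" using p'(2) miso_ideal[OF iso D] by simp
    then have "rem b' M' (down b' M' (\<sigma> p)) p'" using p'(1) by (simp add: rem_def)
    then have "p' = \<sigma> p" using rem_down sp[OF p] by auto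
    then show "b' (\<sigma> p) = b p" using p' by simp
  qed
  have ord: "\<forall>p\<in>{1..M}. \<forall>q\<in>{1..M}. q \<in> down b M p \<longleftrightarrow> \<sigma> q \<in> down b' M' (\<sigma> p)"
  proof (intro ballI)
    fix p q assume p: "p \<in> {1..M}" and q: "q \<in> {1..M}"
    have "q \<in> down b M p \<longleftrightarrow> down b M q \<subseteq> down b M p" using down_mem_sub q by auto
    also have "\<dots> \<longleftrightarrow> \<Psi> (down b M q) \<subseteq> \<Psi> (down b M p)" using miso_sub[OF iso down_ideal down_ideal] by blast
    also have "\<dots> \<longleftrightarrow> down b' M' (\<sigma> q) \<subseteq> down b' M' (\<sigma> p)" using sp[OF p] sp[OF q] by simp
    also have "\<dots> \<longleftrightarrow> \<sigma> q \<in> down b' M' (\<sigma> p)" using down_mem_sub sp[OF q] by auto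
    finally show "q \<in> down b M p \<longleftrightarrow> \<sigma> q \<in> down b' M' (\<sigma> p)" .
  qed
  show ?thesis using sigma_recover[OF sbij lab ord M(1) bM] .
qed


fun rv :: "nat list \<Rightarrow> nat" where
  "rv [] = 0"
| "rv (d # r) = d + 2 * rv r"

lemma rv_append: "rv (xs @ ys) = rv xs + 2 ^ length xs * rv ys"
  by (induction xs) auto

lemma hval_rv: "hval w = rv (rev w)"
proof (induction w rule: rev_induct)
  case Nil then show ?case by simp
next
  case (snoc d w)
  have "hval (w @ [d]) = 2 * hval w + d" by simp
  then show ?case using snoc by simp
qed

lemma rv_snoc0: "rv (xs @ [0]) = rv xs"
  by (simp add: rv_append)

lemma rv_bound: "set r \<subseteq> {0,1,2} \<Longrightarrow> rv r + 2 \<le> 2 ^ Suc (length r)"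
proof (induction r)
  case Nil then show ?case by simp
next
  case (Cons d r)
  then have "d \<le> 2" by auto
  then show ?case using Cons by simp
qed

definition pre :: "nat list \<Rightarrow> nat \<Rightarrow> nat" where
  "pre w j = rv (drop j (rev w))"

definition dg :: "nat list \<Rightarrow> nat \<Rightarrow> nat" where
  "dg w j = (if j < length w then rev w ! j else 0)"

lemma pre_step: "pre w j = dg w j + 2 * pre w (Suc j)"
proof (cases "j < length w")
  case True
  then have "drop j (rev w) = rev w ! j # drop (Suc j) (rev w)"
    by (simp add: Cons_nth_drop_Suc)
  then show ?thesis by (simp add: pre_def dg_def True)
next
  case False
  then show ?thesis by (simp add: pre_def dg_def)
qed

lemma hyp_set: "w \<in> hyperbinary n \<Longrightarrow> set w \<subseteq> {0,1,2}"
  by (simp add: hyperbinary_def)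

lemma hyp_val: "w \<in> hyperbinary n \<Longrightarrow> rv (rev w) = n"
  using hval_rv[of w] by (simp add: hyperbinary_def del: hval.simps)

lemma dg_le2: "w \<in> hyperbinary n \<Longrightarrow> dg w j \<le> 2"
proof -
  assume w: "w \<in> hyperbinary n"
  show ?thesis
  proof (cases "j < length w")
    case True
    then have "rev w ! j \<in> set w" by (metis length_rev nth_mem set_rev)
    then show ?thesis using hyp_set[OF w] True by (auto simp: dg_def)
  next
    case False then show ?thesis by (simp add: dg_def)
  qed
qed

lemma pre_bounds: assumes w: "w \<in> hyperbinary n"
  shows "pre w j \<le> n div 2 ^ j \<and> n div 2 ^ j \<le> pre w j + 1"
proof -
  let ?r = "rev w"
  have n: "rv ?r = n" using hyp_val[OF w] .
  have sr: "set ?r \<subseteq> {0,1,2}" using hyp_set[OF w] by simp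
  have split: "n = rv (take j ?r) + 2 ^ length (take j ?r) * rv (drop j ?r)"
    using n rv_append[of "take j ?r" "drop j ?r"] by simp
  have tb: "rv (take j ?r) + 2 \<le> 2 ^ Suc (length (take j ?r))"
    using sr by (intro rv_bound) (meson in_set_takeD subset_iff)
  show ?thesis
  proof (cases "j \<le> length ?r")
    case True
    then have lt: "length (take j ?r) = j" by simp
    let ?P = "pre w j"
    have eq: "n = rv (take j ?r) + 2 ^ j * ?P" using split lt by (simp add: pre_def)
    have "2 ^ j * ?P \<le> n" using eq by simp
    then have "?P \<le> n div 2 ^ j" by (simp add: less_eq_div_iff_mult_less_eq mult.commute)
    moreover have "n < (?P + 2) * 2 ^ j" using eq tb lt by (simp add: algebra_simps)
    then have "n div 2 ^ j < ?P + 2" by (simp add: div_less_iff_less_mult)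
    ultimately show ?thesis by simp
  next
    case False
    then have "drop j ?r = []" by simp
    then have p0: "pre w j = 0" by (simp add: pre_def)
    have "take j ?r = ?r" using False by simp
    then have "n + 2 \<le> 2 ^ Suc (length ?r)" using tb n by simp
    also have "\<dots> \<le> 2 ^ j" using False by (intro power_increasing) auto
    finally have "n div 2 ^ j = 0" by simp
    then show ?thesis using p0 by simp
  qed
qed

definition ee :: "nat \<Rightarrow> nat list \<Rightarrow> nat \<Rightarrow> nat" where
  "ee n w j = n div 2 ^ j - pre w j"

lemma ee_pre: "w \<in> hyperbinary n \<Longrightarrow> pre w j + ee n w j = n div 2 ^ j"
  using pre_bounds by (simp add: ee_def)

lemma ee_le1: "w \<in> hyperbinary n \<Longrightarrow> ee n w j \<le> 1"
proof -
  assume "w \<in> hyperbinary n"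
  from pre_bounds[OF this, of j] show ?thesis unfolding ee_def by arith
qed

lemma div_step: "(n::nat) div 2 ^ j = n div 2 ^ j mod 2 + 2 * (n div 2 ^ Suc j)"
proof -
  have "n div 2 ^ Suc j = n div 2 ^ j div 2" by (simp only: power_Suc2 div_mult2_eq)
  then show ?thesis by simp
qed

lemma digit: assumes w: "w \<in> hyperbinary n"
  shows "dg w j + ee n w j = n div 2 ^ j mod 2 + 2 * ee n w (Suc j)"
proof -
  have "pre w j = dg w j + 2 * pre w (Suc j)" by (rule pre_step)
  moreover have "pre w j + ee n w j = n div 2 ^ j" by (rule ee_pre[OF w])
  moreover have "pre w (Suc j) + ee n w (Suc j) = n div 2 ^ Suc j" by (rule ee_pre[OF w])
  moreover have "n div 2 ^ j = n div 2 ^ j mod 2 + 2 * (n div 2 ^ Suc j)" by (rule div_step)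
  ultimately show ?thesis by linarith
qed

definition Eset :: "nat \<Rightarrow> nat list \<Rightarrow> nat set" where
  "Eset n w = {j. ee n w j = 1}"

definition bits :: "nat \<Rightarrow> nat \<Rightarrow> bool" where
  "bits n p \<longleftrightarrow> odd (n div 2 ^ p)"

lemma ee_cases: "w \<in> hyperbinary n \<Longrightarrow> ee n w j = (if j \<in> Eset n w then 1 else 0)"
  using ee_le1[of w n j] by (auto simp: Eset_def)

lemma ee_0: "w \<in> hyperbinary n \<Longrightarrow> ee n w 0 = 0"
  using hyp_val[of w n] by (simp add: ee_def pre_def)

lemma ee_big: "w \<in> hyperbinary n \<Longrightarrow> n < 2 ^ j \<Longrightarrow> ee n w j = 0"
  by (simp add: ee_def)

lemma E_ideal: assumes w: "w \<in> hyperbinary n" and nM: "n < 2 ^ Suc M"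
  shows "ideal (bits n) M (Eset n w)"
  unfolding ideal_def
proof (intro conjI allI impI)
  show "Eset n w \<subseteq> {1..M}"
  proof
    fix j assume j: "j \<in> Eset n w"
    then have e1: "ee n w j = 1" by (simp add: Eset_def)
    have "j \<noteq> 0"
    proof
      assume "j = 0" with e1 ee_0[OF w] show False by simp
    qed
    moreover have "j \<le> M"
    proof (rule ccontr)
      assume "\<not> j \<le> M"
      then have "2 ^ Suc M \<le> (2::nat) ^ j" by (intro power_increasing) auto
      then have "ee n w j = 0" using ee_big[OF w] nM by simp
      then show False using e1 by simp
    qed
    ultimately show "j \<in> {1..M}" by simp
  qed
next
  fix q assume q: "1 \<le> q \<and> q < M" "Suc q \<in> Eset n w \<and> bits n q"
  have d: "dg w q + ee n w q = n div 2 ^ q mod 2 + 2 * ee n w (Suc q)" by (rule digit[OF w])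
  have "n div 2 ^ q mod 2 = 1" using q by (simp add: bits_def odd_iff_mod_2_eq_one)
  moreover have "ee n w (Suc q) = 1" using q by (simp add: Eset_def)
  ultimately have "dg w q + ee n w q = 3" using d by simp
  then have "ee n w q = 1" using dg_le2[OF w, of q] ee_le1[OF w, of q] by linarith
  then show "q \<in> Eset n w" by (simp add: Eset_def)
next
  fix q assume q: "1 \<le> q \<and> q < M" "q \<in> Eset n w \<and> \<not> bits n q"
  have d: "dg w q + ee n w q = n div 2 ^ q mod 2 + 2 * ee n w (Suc q)" by (rule digit[OF w])
  have "n div 2 ^ q mod 2 = 0" using q by (simp add: bits_def even_iff_mod_2_eq_zero)
  moreover have "ee n w q = 1" using q by (simp add: Eset_def)
  ultimately have "dg w q + 1 = 2 * ee n w (Suc q)" using d by simp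
  then have "ee n w (Suc q) = 1" using ee_le1[OF w, of "Suc q"] by linarith
  then show "Suc q \<in> Eset n w" by (simp add: Eset_def)
qed

lemma dg_last: assumes w: "w \<in> hyperbinary n" and ne: "w \<noteq> []" shows "dg w (length w - 1) \<noteq> 0"
proof -
  have "rev w ! (length w - 1) = w ! 0" using ne by (simp add: rev_nth)
  also have "\<dots> = hd w" using ne by (simp add: hd_conv_nth)
  finally have e: "rev w ! (length w - 1) = hd w" .
  have "hd w \<noteq> 0" using w ne unfolding hyperbinary_def by blast
  moreover have "length w - 1 < length w" using ne by simp
  ultimately show ?thesis using e by (simp add: dg_def)
qed

lemma len_le: assumes w: "w \<in> hyperbinary n" and z: "\<And>j. K \<le> j \<Longrightarrow> dg w j = 0" shows "length w \<le> K"
proof (rule ccontr)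
  assume "\<not> length w \<le> K"
  then have "w \<noteq> []" "K \<le> length w - 1" by auto
  have "dg w (length w - 1) \<noteq> 0" using dg_last[OF w \<open>w \<noteq> []\<close>] .
  moreover have "dg w (length w - 1) = 0" using z \<open>K \<le> length w - 1\<close> by blast
  ultimately show False by simp
qed

lemma len_gt: "dg w j \<noteq> 0 \<Longrightarrow> j < length w"
  by (simp add: dg_def split: if_splits)

lemma dg_pre: "dg w j = pre w j - 2 * pre w (Suc j)"
  using pre_step[of w j] by simp

lemma E_inj: assumes u: "u \<in> hyperbinary n" and v: "v \<in> hyperbinary n" and E: "Eset n u = Eset n v"
  shows "u = v"
proof -
  have ee: "ee n u j = ee n v j" for j using ee_cases[OF u] ee_cases[OF v] E by simp
  have pe: "pre u j = pre v j" for j using ee_pre[OF u, of j] ee_pre[OF v, of j] ee[of j] by linarith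
  have de: "dg u j = dg v j" for j by (simp add: dg_pre pe)
  have "length u \<le> length v"
  proof (rule len_le[OF u])
    fix j assume "length v \<le> j" then show "dg u j = 0" using de[of j] by (simp add: dg_def)
  qed
  moreover have "length v \<le> length u"
  proof (rule len_le[OF v])
    fix j assume "length u \<le> j" then show "dg v j = 0" using de[of j] by (simp add: dg_def)
  qed
  ultimately have l: "length u = length v" by simp
  have "rev u = rev v"
  proof (rule nth_equalityI)
    show "length (rev u) = length (rev v)" using l by simp
    fix i assume "i < length (rev u)"
    then show "rev u ! i = rev v ! i" using de[of i] l by (simp add: dg_def)
  qed
  then show ?thesis by simp
qed

definition eI :: "nat set \<Rightarrow> nat \<Rightarrow> nat" where
  "eI I j = (if j \<in> I then 1 else 0)"

definition dI :: "nat \<Rightarrow> nat set \<Rightarrow> nat \<Rightarrow> nat" where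
  "dI n I j = n div 2 ^ j mod 2 + 2 * eI I (Suc j) - eI I j"

definition wI :: "nat \<Rightarrow> nat \<Rightarrow> nat set \<Rightarrow> nat list" where
  "wI n M I = rev (if M \<in> I then map (dI n I) [0..<M] else map (dI n I) [0..<Suc M])"

lemma divM: assumes "2 ^ M \<le> n" "n < 2 ^ Suc M" shows "n div 2 ^ M = (1::nat)"
proof -
  have "1 \<le> n div 2 ^ M" using assms by (simp add: less_eq_div_iff_mult_less_eq)
  moreover have "n div 2 ^ M < 2" using assms by (simp add: div_less_iff_less_mult mult.commute)
  ultimately show ?thesis by simp
qed

lemma rv_drop_snoc0: "rv (drop j (xs @ [0])) = rv (drop j xs)"
  by (cases "j \<le> length xs") (auto simp: rv_snoc0)

locale cfg =
  fixes n M :: nat and I :: "nat set"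
  assumes ev: "even n" and lo: "2 ^ M \<le> n" and hi: "n < 2 ^ Suc M" and M1: "1 \<le> M"
    and id: "ideal (bits n) M I"
begin

lemma I_sub: "I \<subseteq> {1..M}" using id ideal_sub by blast

lemma dI_add: "dI n I j + eI I j = n div 2 ^ j mod 2 + 2 * eI I (Suc j)"
proof -
  have "eI I j \<le> n div 2 ^ j mod 2 + 2 * eI I (Suc j)"
  proof (cases "j \<in> I")
    case False then show ?thesis by (simp add: eI_def)
  next
    case True
    then have j: "1 \<le> j" "j \<le> M" using I_sub by auto
    show ?thesis
    proof (cases "j = M")
      case True
      then show ?thesis using divM[OF lo hi] by (simp add: eI_def)
    next
      case False
      show ?thesis
      proof (cases "bits n j")
        case True then show ?thesis by (simp add: eI_def bits_def odd_iff_mod_2_eq_one)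
      next
        case nb: False
        have "Suc j \<in> I" using ideal_c2[OF id j(1)] False j \<open>j \<in> I\<close> nb by simp
        then show ?thesis by (simp add: eI_def)
      qed
    qed
  qed
  then show ?thesis by (simp add: dI_def)
qed

lemma dI_le2: "dI n I j \<le> 2"
proof -
  have "\<not> (n div 2 ^ j mod 2 = 1 \<and> eI I (Suc j) = 1 \<and> eI I j = 0)"
  proof
    assume h: "n div 2 ^ j mod 2 = 1 \<and> eI I (Suc j) = 1 \<and> eI I j = 0"
    then have sj: "Suc j \<in> I" by (simp add: eI_def split: if_splits)
    then have "Suc j \<le> M" using I_sub by auto
    show False
    proof (cases "j = 0")
      case True then show False using h ev by simp
    next
      case False
      then have "j \<in> I" using ideal_c1[OF id, of j] sj \<open>Suc j \<le> M\<close> h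
        by (simp add: bits_def odd_iff_mod_2_eq_one)
      then show False using h by (simp add: eI_def)
    qed
  qed
  moreover have "n div 2 ^ j mod 2 \<le> 1" "eI I (Suc j) \<le> 1" "eI I j \<le> 1" by (auto simp: eI_def)
  ultimately show ?thesis unfolding dI_def by linarith
qed

lemma tele: "j \<le> K \<Longrightarrow> rv (map (dI n I) [j..<K]) + eI I j = n div 2 ^ j mod 2 ^ (K - j) + 2 ^ (K - j) * eI I K"
proof (induction "K - j" arbitrary: j)
  case 0 then show ?case by simp
next
  case (Suc d)
  then have jK: "j < K" by simp
  then have up: "[j..<K] = j # [Suc j..<K]" by (simp add: upt_conv_Cons)
  have IH: "rv (map (dI n I) [Suc j..<K]) + eI I (Suc j) = n div 2 ^ Suc j mod 2 ^ (K - Suc j) + 2 ^ (K - Suc j) * eI I K"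
    using Suc jK by simp
  have m: "n div 2 ^ j mod 2 ^ (K - j) = 2 * (n div 2 ^ j div 2 mod 2 ^ (K - Suc j)) + n div 2 ^ j mod 2"
  proof -
    have "K - j = Suc (K - Suc j)" using jK by simp
    then have "(2::nat) ^ (K - j) = 2 * 2 ^ (K - Suc j)" by simp
    then show ?thesis by (simp add: mod_mult2_eq)
  qed
  have q: "n div 2 ^ Suc j = n div 2 ^ j div 2" by (simp only: power_Suc2 div_mult2_eq)
  have pw: "(2::nat) ^ (K - j) = 2 * 2 ^ (K - Suc j)" using jK by (simp add: Suc_diff_Suc[symmetric])
  have "rv (map (dI n I) [j..<K]) + eI I j = dI n I j + eI I j + 2 * rv (map (dI n I) [Suc j..<K])"
    using up by simp
  also have "\<dots> = n div 2 ^ j mod 2 + 2 * (eI I (Suc j) + rv (map (dI n I) [Suc j..<K]))"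
    using dI_add[of j] by simp
  also have "\<dots> = n div 2 ^ j mod 2 + 2 * (n div 2 ^ Suc j mod 2 ^ (K - Suc j) + 2 ^ (K - Suc j) * eI I K)"
    using IH by simp
  also have "\<dots> = n div 2 ^ j mod 2 ^ (K - j) + 2 ^ (K - j) * eI I K"
    using m q pw by simp
  finally show ?case .
qed

lemma tele2: "j \<le> Suc M \<Longrightarrow> rv (map (dI n I) [j..<Suc M]) + eI I j = n div 2 ^ j"
proof -
  assume j: "j \<le> Suc M"
  have "eI I (Suc M) = 0" using I_sub by (auto simp: eI_def)
  moreover have "n div 2 ^ j < 2 ^ (Suc M - j)"
  proof -
    have "(2::nat) ^ Suc M = 2 ^ (Suc M - j) * 2 ^ j" using j by (simp add: power_add[symmetric])
    then show ?thesis using hi by (simp add: div_less_iff_less_mult)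
  qed
  ultimately show ?thesis using tele[OF j] by simp
qed

lemma dI_M: "M \<in> I \<Longrightarrow> dI n I M = 0"
  using divM[OF lo hi] I_sub by (auto simp: dI_def eI_def)

lemma pre_wI: "pre (wI n M I) j + eI I j = n div 2 ^ j"
proof (cases "j \<le> Suc M")
  case True
  have dr: "drop j (map (dI n I) [0..<Suc M]) = map (dI n I) [j..<Suc M]" by (simp add: drop_map)
  have "pre (wI n M I) j = rv (map (dI n I) [j..<Suc M])"
  proof (cases "M \<in> I")
    case True
    have "map (dI n I) [0..<Suc M] = map (dI n I) [0..<M] @ [0]" using dI_M[OF True] by simp
    then have "rv (drop j (map (dI n I) [0..<M])) = rv (map (dI n I) [j..<Suc M])"
      using dr rv_drop_snoc0 by metis
    then show ?thesis using True by (simp add: wI_def pre_def)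
  next
    case False
    then show ?thesis using dr by (simp add: wI_def pre_def)
  qed
  then show ?thesis using tele2[OF True] by simp
next
  case False
  have "pre (wI n M I) j = 0" using False by (simp add: wI_def pre_def)
  moreover have "eI I j = 0" using I_sub False by (auto simp: eI_def)
  moreover have "n div 2 ^ j = 0"
  proof -
    have "(2::nat) ^ Suc M \<le> 2 ^ j" using False by (intro power_increasing) auto
    then show ?thesis using hi by simp
  qed
  ultimately show ?thesis by simp
qed

lemma wI_hyp: "wI n M I \<in> hyperbinary n"
proof -
  let ?w = "wI n M I"
  have s: "set ?w \<subseteq> {0,1,2}"
  proof
    fix x assume "x \<in> set ?w"
    then obtain j where "x = dI n I j" by (auto simp: wI_def split: if_splits)
    then show "x \<in> {0,1,2}" using dI_le2[of j] by auto
  qed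
  have v: "hval ?w = n"
  proof -
    have "0 \<notin> I" using I_sub by auto
    then have "pre ?w 0 = n" using pre_wI[of 0] by (simp add: eI_def)
    then show ?thesis by (simp add: pre_def hval_rv del: hval.simps)
  qed
  have h: "hd ?w \<noteq> 0"
  proof (cases "M \<in> I")
    case True
    obtain M' where M': "M = Suc M'" using M1 by (cases M) auto
    have "hd ?w = dI n I M'" using True M' by (simp add: wI_def hd_rev)
    moreover have "dI n I M' + eI I M' = n div 2 ^ M' mod 2 + 2 * eI I M" using dI_add[of M'] M' by simp
    moreover have "eI I M = 1" using True by (simp add: eI_def)
    moreover have "eI I M' \<le> 1" by (simp add: eI_def)
    ultimately show ?thesis by linarith
  next
    case False
    have "hd ?w = dI n I M" using False by (simp add: wI_def hd_rev)
    moreover have "dI n I M = 1" using False divM[OF lo hi] I_sub by (auto simp: dI_def eI_def)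
    ultimately show ?thesis by simp
  qed
  show ?thesis using s v h by (simp add: hyperbinary_def del: hval.simps)
qed

lemma wI_E: "Eset n (wI n M I) = I"
proof -
  have "ee n (wI n M I) j = eI I j" for j using pre_wI[of j] by (simp add: ee_def)
  then show ?thesis by (auto simp: Eset_def eI_def)
qed

end


lemma pre_change:
  fixes Y X :: "nat list"
  shows "j \<noteq> Suc (length Y) \<Longrightarrow> rv (drop j (Y @ [2, a] @ X)) = rv (drop j (Y @ [0, Suc a] @ X))"
    and "rv (drop (Suc (length Y)) (Y @ [0, Suc a] @ X)) = rv (drop (Suc (length Y)) (Y @ [2, a] @ X)) + 1"
proof -
  assume j: "j \<noteq> Suc (length Y)"
  show "rv (drop j (Y @ [2, a] @ X)) = rv (drop j (Y @ [0, Suc a] @ X))"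
  proof (cases "j \<le> length Y")
    case True
    then show ?thesis by (simp add: drop_append rv_append)
  next
    case False
    then have "Suc (Suc (length Y)) \<le> j" using j by simp
    then obtain k where "j = Suc (Suc (length Y)) + k" using le_Suc_ex by blast
    then show ?thesis by (simp add: drop_append)
  qed
next
  show "rv (drop (Suc (length Y)) (Y @ [0, Suc a] @ X)) = rv (drop (Suc (length Y)) (Y @ [2, a] @ X)) + 1"
    by (simp add: drop_append)
qed

lemma E_step: assumes u: "u \<in> hyperbinary n" and v: "v \<in> hyperbinary n"
  and eq: "\<And>j. j \<noteq> p \<Longrightarrow> pre u j = pre v j" and pp: "pre v p = pre u p + 1"
  shows "p \<in> Eset n u \<and> Eset n v = Eset n u - {p}"
proof -
  have a: "pre u j + ee n u j = pre v j + ee n v j" for j using ee_pre[OF u] ee_pre[OF v] by metis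
  have "ee n u p = 1" using a[of p] pp ee_le1[OF u, of p] by linarith
  moreover have "ee n v p = 0" using a[of p] pp ee_le1[OF u, of p] by linarith
  moreover have "ee n u j = ee n v j" if "j \<noteq> p" for j using a[of j] eq[OF that] by linarith
  ultimately have "j \<in> Eset n v \<longleftrightarrow> j \<in> Eset n u - {p}" for j
    by (cases "j = p") (simp_all add: Eset_def)
  then show ?thesis using \<open>ee n u p = 1\<close> by (auto simp: Eset_def)
qed

lemma label0: "u \<in> hyperbinary n \<Longrightarrow> p \<in> Eset n u \<Longrightarrow> dg u p = 0 \<Longrightarrow> bits n p"
  using digit[of u n p] by (simp add: Eset_def bits_def odd_iff_mod_2_eq_one)

lemma label1: assumes "u \<in> hyperbinary n" "p \<in> Eset n u" "dg u p = 1" shows "\<not> bits n p"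
proof -
  have d: "2 = n div 2 ^ p mod 2 + 2 * ee n u (Suc p)" using digit[OF assms(1), of p] assms(2,3) by (simp add: Eset_def)
  have "ee n u (Suc p) \<le> 1" using ee_le1[OF assms(1)] .
  moreover have "n div 2 ^ p mod 2 \<le> 1" by simp
  ultimately have "n div 2 ^ p mod 2 = 0" using d by (cases "ee n u (Suc p) = 0") auto
  then show ?thesis by (simp add: bits_def even_iff_mod_2_eq_zero)
qed

lemma arc_fwd:
  assumes u: "u \<in> hyperbinary n" and v: "v \<in> hyperbinary n"
    and sh: "(u = x @ [a, 2] @ y \<and> v = x @ [Suc a, 0] @ y) \<or> (a = 0 \<and> x = [] \<and> u = 2 # y \<and> v = [1, 0] @ y)"
  shows "Suc (length y) \<in> Eset n u \<and> Eset n v = Eset n u - {Suc (length y)} \<and> dg u (Suc (length y)) = a"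
proof -
  let ?p = "Suc (length y)"
  have pc: "(\<forall>j. j \<noteq> ?p \<longrightarrow> pre u j = pre v j) \<and> pre v ?p = pre u ?p + 1 \<and> dg u ?p = a"
    using sh
  proof
    assume h: "u = x @ [a, 2] @ y \<and> v = x @ [Suc a, 0] @ y"
    then have r: "rev u = rev y @ [2, a] @ rev x" "rev v = rev y @ [0, Suc a] @ rev x" by auto
    show ?thesis using pre_change[where Y="rev y" and X="rev x" and a=a] r
      by (auto simp: pre_def dg_def h nth_append)
  next
    assume h: "a = 0 \<and> x = [] \<and> u = 2 # y \<and> v = [1, 0] @ y"
    then have r: "rev u = rev y @ [2]" "rev v = rev y @ [0, Suc 0] @ []" by auto
    have r2: "rv (drop j (rev u)) = rv (drop j (rev y @ [2, 0] @ []))" for j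
      using r rv_drop_snoc0[of j "rev y @ [2]"] by simp
    show ?thesis using pre_change[where Y="rev y" and X="[]" and a=0] r r2 h
      by (auto simp: pre_def dg_def)
  qed
  then show ?thesis using E_step[OF u v, of ?p] by blast
qed


lemma split2: "Suc i < length r \<Longrightarrow> r = take i r @ [r ! i, r ! Suc i] @ drop (Suc (Suc i)) r"
proof -
  assume h: "Suc i < length r"
  have "r = take i r @ drop i r" by simp
  also have "drop i r = r ! i # drop (Suc i) r" using h by (simp add: Cons_nth_drop_Suc)
  also have "drop (Suc i) r = r ! Suc i # drop (Suc (Suc i)) r" using h by (simp add: Cons_nth_drop_Suc)
  finally show ?thesis by simp
qed

lemma split1: "length r = Suc i \<Longrightarrow> r = take i r @ [r ! i]"
proof -
  assume h: "length r = Suc i"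
  have ne: "r \<noteq> []" using h by auto
  have A: "r = butlast r @ [last r]" using ne by simp
  have B: "butlast r = take i r" using h by (simp add: butlast_conv_take)
  have C: "last r = r ! i" using ne h by (simp add: last_conv_nth)
  show ?thesis using A B C by metis
qed

lemma take_eq: "(\<And>j. j < i \<Longrightarrow> dg u j = dg v j) \<Longrightarrow> i \<le> length u \<Longrightarrow> i \<le> length v \<Longrightarrow> take i (rev u) = take i (rev v)"
  by (rule nth_equalityI) (auto simp: dg_def)

lemma drop_eq: assumes "length u = length v" "\<And>j. k \<le> j \<Longrightarrow> dg u j = dg v j"
  shows "drop k (rev u) = drop k (rev v)"
proof (rule nth_equalityI)
  show "length (drop k (rev u)) = length (drop k (rev v))" using assms(1) by simp
  fix i assume i: "i < length (drop k (rev u))"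
  have "dg u (k + i) = dg v (k + i)" using assms(2) by simp
  moreover have "k + i < length v" using i assms(1) by simp
  ultimately show "drop k (rev u) ! i = drop k (rev v) ! i" using i assms(1) by (simp add: dg_def)
qed

lemma arc_bwd:
  assumes u: "u \<in> hyperbinary n" and v: "v \<in> hyperbinary n"
    and pE: "p \<in> Eset n u" and E: "Eset n v = Eset n u - {p}"
  shows "(bits n p \<longrightarrow> arcA n u v) \<and> (\<not> bits n p \<longrightarrow> arcB n u v)"
proof -
  have eeu: "ee n u p = 1" using pE by (simp add: Eset_def)
  have eev: "ee n v p = 0" using ee_cases[OF v, of p] E by simp
  have eeo: "ee n u j = ee n v j" if "j \<noteq> p" for j using ee_cases[OF u, of j] ee_cases[OF v, of j] E that by simp
  have pe: "pre u j = pre v j" if "j \<noteq> p" for j using ee_pre[OF u, of j] ee_pre[OF v, of j] eeo[OF that] by linarith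
  have pp: "pre v p = pre u p + 1" using ee_pre[OF u, of p] ee_pre[OF v, of p] eeu eev by linarith
  have "p \<noteq> 0" using eeu ee_0[OF u] by (cases p) auto
  then obtain i where pi: "p = Suc i" by (cases p) auto
  have dgo: "dg u j = dg v j" if "j \<noteq> i" "j \<noteq> p" for j
  proof -
    have "Suc j \<noteq> p" using that pi by simp
    then show ?thesis using pe[OF that(2)] pe[of "Suc j"] pre_step[of u j] pre_step[of v j] by linarith
  qed
  have "dg u i = dg v i + 2" using pre_step[of u i] pre_step[of v i] pe[of i] pp pi by simp
  then have dui: "dg u i = 2" and dvi: "dg v i = 0" using dg_le2[OF u, of i] by auto
  have dvp: "dg v p = dg u p + 1" using pre_step[of u p] pre_step[of v p] pe[of "Suc p"] pp by simp
  then have dup: "dg u p \<le> 1" using dg_le2[OF v, of p] by simp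
  have il: "i < length u" using dui len_gt by (metis zero_neq_numeral)
  show ?thesis
  proof (cases "p < length u")
    case True
    define a where "a = dg u p"
    have lvu: "length v \<le> length u"
    proof (rule len_le[OF v])
      fix j assume "length u \<le> j"
      then have "j \<noteq> i" "j \<noteq> p" using True pi by auto
      then show "dg v j = 0" using dgo \<open>length u \<le> j\<close> by (metis dg_def not_le)
    qed
    have luv: "length u \<le> length v"
    proof (cases "length u - 1 = p")
      case True
      then have "dg v p \<noteq> 0" using dvp by simp
      then show ?thesis using len_gt True by fastforce
    next
      case False
      have ne: "u \<noteq> []" using il by auto
      have "length u - 1 \<noteq> i" "length u - 1 \<noteq> p" using False True pi by auto
      then have "dg v (length u - 1) \<noteq> 0" using dgo dg_last[OF u ne] by metis
      then show ?thesis using len_gt by fastforce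
    qed
    have L: "length u = length v" using lvu luv by simp
    have lt: "Suc i < length (rev u)" "Suc i < length (rev v)" using True pi L by auto
    have ru: "rev u = take i (rev u) @ [2, a] @ drop (Suc (Suc i)) (rev u)"
      using split2[OF lt(1)] dui a_def pi True by (simp add: dg_def)
    have rvv: "rev v = take i (rev v) @ [0, Suc a] @ drop (Suc (Suc i)) (rev v)"
      using split2[OF lt(2)] dvi dvp a_def pi True L by (simp add: dg_def)
    have te: "take i (rev u) = take i (rev v)" using dgo pi il L by (intro take_eq) auto
    have de: "drop (Suc (Suc i)) (rev u) = drop (Suc (Suc i)) (rev v)" using dgo pi L by (intro drop_eq) auto
    define X where "X = rev (drop (Suc (Suc i)) (rev u))"
    define Y where "Y = rev (take i (rev u))"
    have uu: "u = X @ [a, 2] @ Y" using arg_cong[OF ru, of rev] by (simp add: X_def Y_def)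
    have vv: "v = X @ [Suc a, 0] @ Y" using arg_cong[OF rvv, of rev] te de by (simp add: X_def Y_def)
    show ?thesis
    proof (cases "a = 0")
      case True
      then have "bits n p" using label0[OF u pE] a_def by simp
      moreover have "arcA n u v" using u v uu vv True unfolding arcA_def by auto
      ultimately show ?thesis by simp
    next
      case False
      then have a1: "a = 1" using dup a_def by simp
      then have "\<not> bits n p" using label1[OF u pE] a_def by simp
      moreover have "arcB n u v" using u v uu vv a1 unfolding arcB_def by (auto simp: numeral_2_eq_2)
      ultimately show ?thesis by simp
    qed
  next
    case False
    then have lu: "length u = p" using il pi by simp
    have d0: "dg u p = 0" using lu by (simp add: dg_def)
    then have bp: "bits n p" using label0[OF u pE] by simp
    have "dg v p = 1" using dvp d0 by simp
    then have "p < length v" using len_gt by fastforce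
    moreover have "length v \<le> Suc p"
    proof (rule len_le[OF v])
      fix j assume "Suc p \<le> j"
      then have "j \<noteq> i" "j \<noteq> p" using pi by auto
      then show "dg v j = 0" using dgo \<open>Suc p \<le> j\<close> lu by (metis dg_def not_le Suc_leD)
    qed
    ultimately have lv: "length v = Suc p" by simp
    have ru: "rev u = take i (rev u) @ [2]" using split1[of "rev u" i] lu pi dui by (simp add: dg_def)
    have rv2: "rev v = take (Suc i) (rev v) @ [1]" using split1[of "rev v" "Suc i"] lv pi \<open>dg v p = 1\<close> by (simp add: dg_def)
    have "take (Suc i) (rev v) = take i (rev v) @ [0]" using dvi lv pi
      by (simp add: take_Suc_conv_app_nth dg_def)
    then have rvv: "rev v = take i (rev v) @ [0, 1]" using rv2 by simp
    have te: "take i (rev u) = take i (rev v)" using dgo pi lu lv by (intro take_eq) auto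
    define Y where "Y = rev (take i (rev u))"
    have uu: "u = 2 # Y" using arg_cong[OF ru, of rev] by (simp add: Y_def)
    have vv: "v = [1, 0] @ Y" using arg_cong[OF rvv, of rev] te by (simp add: Y_def)
    have "arcA n u v" using u v uu vv unfolding arcA_def by auto
    then show ?thesis using bp by simp
  qed
qed

lemma arc_corr:
  assumes u: "u \<in> hyperbinary n" and v: "v \<in> hyperbinary n"
  shows "(arcA n u v \<longleftrightarrow> marc (bits n) (Eset n u) (Eset n v) True) \<and>
         (arcB n u v \<longleftrightarrow> marc (bits n) (Eset n u) (Eset n v) False)"
proof (intro conjI iffI)
  assume "arcA n u v"
  then have "(\<exists>x y. u = x @ [0, 2] @ y \<and> v = x @ [Suc 0, 0] @ y) \<or> (\<exists>y. u = 2 # y \<and> v = [1, 0] @ y)"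
    by (simp add: arcA_def)
  then obtain x y where "(u = x @ [0, 2] @ y \<and> v = x @ [Suc 0, 0] @ y) \<or> (0 = (0::nat) \<and> x = [] \<and> u = 2 # y \<and> v = [1, 0] @ y)"
    by blast
  from arc_fwd[OF u v this] show "marc (bits n) (Eset n u) (Eset n v) True"
    using label0[OF u] unfolding marc_def by blast
next
  assume "arcB n u v"
  then obtain x y where "u = x @ [1, 2] @ y \<and> v = x @ [2, 0] @ y"
    by (auto simp: arcB_def)
  then have "u = x @ [1, 2] @ y \<and> v = x @ [Suc 1, 0] @ y" by (simp add: eval_nat_numeral)
  then have "(u = x @ [1, 2] @ y \<and> v = x @ [Suc 1, 0] @ y) \<or> (1 = (0::nat) \<and> x = [] \<and> u = 2 # y \<and> v = [1, 0] @ y)"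
    by blast
  from arc_fwd[OF u v this] show "marc (bits n) (Eset n u) (Eset n v) False"
    using label1[OF u] unfolding marc_def by blast
next
  assume "marc (bits n) (Eset n u) (Eset n v) True"
  then obtain p where "p \<in> Eset n u" "Eset n v = Eset n u - {p}" "bits n p" by (auto simp: marc_def)
  then show "arcA n u v" using arc_bwd[OF u v] by blast
next
  assume "marc (bits n) (Eset n u) (Eset n v) False"
  then obtain p where "p \<in> Eset n u" "Eset n v = Eset n u - {p}" "\<not> bits n p" by (auto simp: marc_def)
  then show "arcB n u v" using arc_bwd[OF u v] by blast
qed


lemma H0: "hyperbinary 0 = {[]}"
proof
  show "{[]} \<subseteq> hyperbinary 0" by (simp add: hyperbinary_def)
next
  show "hyperbinary 0 \<subseteq> {[]}"
  proof
    fix w assume w: "w \<in> hyperbinary 0"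
    have "pre w j = 0" for j using pre_bounds[OF w, of j] by simp
    then have "dg w j = 0" for j by (simp add: dg_pre)
    then have "length w \<le> 0" using len_le[OF w] by blast
    then show "w \<in> {[]}" by simp
  qed
qed

lemma exM: "1 \<le> (n::nat) \<Longrightarrow> \<exists>M. 2 ^ M \<le> n \<and> n < 2 ^ Suc M"
proof (induction n rule: less_induct)
  case (less n)
  show ?case
  proof (cases "n = 1")
    case True then show ?thesis by (intro exI[of _ 0]) simp
  next
    case False
    then have "1 \<le> n div 2" "n div 2 < n" using less.prems by auto
    then obtain M where M: "2 ^ M \<le> n div 2" "n div 2 < 2 ^ Suc M" using less.IH by blast
    have "2 ^ Suc M \<le> n" using M(1) by (simp add: less_eq_div_iff_mult_less_eq mult.commute)
    moreover have "n < 2 ^ Suc (Suc M)" using M(2) by (simp add: div_less_iff_less_mult mult.commute)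
    ultimately show ?thesis by blast
  qed
qed

lemma E_bij: assumes ev: "even n" and lo: "2 ^ M \<le> n" and hi: "n < 2 ^ Suc M" and M1: "1 \<le> M"
  shows "bij_betw (Eset n) (hyperbinary n) {I. ideal (bits n) M I}"
proof -
  have "inj_on (Eset n) (hyperbinary n)" using E_inj by (meson inj_onI)
  moreover have "Eset n ` hyperbinary n = {I. ideal (bits n) M I}"
  proof
    show "Eset n ` hyperbinary n \<subseteq> {I. ideal (bits n) M I}" using E_ideal hi by blast
  next
    show "{I. ideal (bits n) M I} \<subseteq> Eset n ` hyperbinary n"
    proof
      fix I assume "I \<in> {I. ideal (bits n) M I}"
      then have c: "cfg n M I" using ev lo hi M1 by (simp add: cfg_def)
      show "I \<in> Eset n ` hyperbinary n" using cfg.wI_hyp[OF c] cfg.wI_E[OF c] by (metis image_eqI)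
    qed
  qed
  ultimately show ?thesis by (simp add: bij_betw_def)
qed

lemma two_words: assumes ev: "even n" and lo: "2 ^ M \<le> n" and hi: "n < 2 ^ Suc M" and M1: "1 \<le> M"
  shows "\<exists>u v. u \<in> hyperbinary n \<and> v \<in> hyperbinary n \<and> u \<noteq> v"
proof -
  have i1: "ideal (bits n) M {}" by (simp add: ideal_def)
  have i2: "ideal (bits n) M {1..M}" by (auto simp: ideal_def)
  have c1: "cfg n M {}" using ev lo hi M1 i1 by (simp add: cfg_def)
  have c2: "cfg n M {1..M}" using ev lo hi M1 i2 by (simp add: cfg_def)
  have "Eset n (wI n M {}) \<noteq> Eset n (wI n M {1..M})" using cfg.wI_E[OF c1] cfg.wI_E[OF c2] M1 by auto
  then show ?thesis using cfg.wI_hyp[OF c1] cfg.wI_hyp[OF c2] by metis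
qed

lemma bitsM: "2 ^ M \<le> n \<Longrightarrow> n < 2 ^ Suc M \<Longrightarrow> bits n M"
  using divM by (simp add: bits_def)

lemma M_ge1: "2 \<le> (n::nat) \<Longrightarrow> n < 2 ^ Suc M \<Longrightarrow> 1 \<le> M"
  by (cases M) auto

lemma eq_from_bits:
  assumes "\<forall>p\<in>{1..M}. bits b p = bits a p" "even a" "even b" "a < 2 ^ Suc M" "b < 2 ^ Suc M"
  shows "a = (b::nat)"
proof (rule bit_eqI)
  fix p
  show "bit a p \<longleftrightarrow> bit b p"
  proof (cases "p = 0")
    case True then show ?thesis using assms by (simp add: bit_iff_odd)
  next
    case False
    show ?thesis
    proof (cases "p \<le> M")
      case True then show ?thesis using assms False by (auto simp: bit_iff_odd bits_def)
    next
      case False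
      then have "(2::nat) ^ Suc M \<le> 2 ^ p" by (intro power_increasing) auto
      then have "a div 2 ^ p = 0" "b div 2 ^ p = 0" using assms by auto
      then show ?thesis by (simp add: bit_iff_odd)
    qed
  qed
qed

theorem mainTheorem10:
  fixes m n :: nat
  assumes "even m" and "even n" and "A_iso m n"
  shows "m = n"
proof -
  obtain \<phi> where phi: "bij_betw \<phi> (hyperbinary m) (hyperbinary n)"
    and ar: "\<forall>u\<in>hyperbinary m. \<forall>v\<in>hyperbinary m.
        (arcA m u v \<longleftrightarrow> arcA n (\<phi> u) (\<phi> v)) \<and> (arcB m u v \<longleftrightarrow> arcB n (\<phi> u) (\<phi> v))"
    using assms(3) unfolding A_iso_def by blast
  show ?thesis
  proof (cases "m = 0 \<or> n = 0")
    case True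
    show ?thesis
    proof (rule ccontr)
      assume ne: "m \<noteq> n"
      show False using True
      proof
        assume m0: "m = 0"
        then have n2: "2 \<le> n" using ne assms(2) by presburger
        obtain M where M: "2 ^ M \<le> n" "n < 2 ^ Suc M" using exM[of n] n2 by auto
        obtain u v where uv: "u \<in> hyperbinary n" "v \<in> hyperbinary n" "u \<noteq> v"
          using two_words[OF assms(2) M M_ge1[OF n2 M(2)]] by blast
        have "hyperbinary n = \<phi> ` {[]}" using phi m0 H0 bij_betw_imp_surj_on by metis
        then show False using uv by auto
      next
        assume n0: "n = 0"
        then have m2: "2 \<le> m" using ne assms(1) by presburger
        obtain M where M: "2 ^ M \<le> m" "m < 2 ^ Suc M" using exM[of m] m2 by auto
        obtain u v where uv: "u \<in> hyperbinary m" "v \<in> hyperbinary m" "u \<noteq> v"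
          using two_words[OF assms(1) M M_ge1[OF m2 M(2)]] by blast
        have "\<phi> u \<in> {[]}" "\<phi> v \<in> {[]}" using phi n0 H0 uv bij_betwE by blast+
        then have "\<phi> u = \<phi> v" by simp
        then show False using uv phi bij_betw_imp_inj_on inj_onD by metis
      qed
    qed
  next
    case False
    then have m2: "2 \<le> m" and n2: "2 \<le> n" using assms(1,2) by presburger+
    obtain Mm where Mm: "2 ^ Mm \<le> m" "m < 2 ^ Suc Mm" using exM[of m] m2 by auto
    obtain Mn where Mn: "2 ^ Mn \<le> n" "n < 2 ^ Suc Mn" using exM[of n] n2 by auto
    have Mm1: "1 \<le> Mm" using M_ge1[OF m2 Mm(2)] .
    have Mn1: "1 \<le> Mn" using M_ge1[OF n2 Mn(2)] .
    have Bm: "bij_betw (Eset m) (hyperbinary m) {I. ideal (bits m) Mm I}" using E_bij[OF assms(1) Mm Mm1] .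
    have Bn: "bij_betw (Eset n) (hyperbinary n) {I. ideal (bits n) Mn I}" using E_bij[OF assms(2) Mn Mn1] .
    let ?g = "inv_into (hyperbinary m) (Eset m)"
    have Bg: "bij_betw ?g {I. ideal (bits m) Mm I} (hyperbinary m)" using Bm bij_betw_inv_into by blast
    define \<Psi> where "\<Psi> = (Eset n \<circ> \<phi>) \<circ> ?g"
    have BP: "bij_betw \<Psi> {I. ideal (bits m) Mm I} {I. ideal (bits n) Mn I}"
      unfolding \<Psi>_def by (rule bij_betw_trans[OF Bg bij_betw_trans[OF phi Bn]])
    have iso: "miso (bits m) Mm (bits n) Mn \<Psi>"
      unfolding miso_def
    proof (intro conjI allI impI)
      show "bij_betw \<Psi> {I. ideal (bits m) Mm I} {I. ideal (bits n) Mn I}" by fact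
    next
      fix I J l assume I: "ideal (bits m) Mm I" and J: "ideal (bits m) Mm J"
      have u: "?g I \<in> hyperbinary m" using Bg I bij_betwE by blast
      have v: "?g J \<in> hyperbinary m" using Bg J bij_betwE by blast
      have EI: "Eset m (?g I) = I" using Bm I bij_betw_inv_into_right by fastforce
      have EJ: "Eset m (?g J) = J" using Bm J bij_betw_inv_into_right by fastforce
      have u': "\<phi> (?g I) \<in> hyperbinary n" using phi u bij_betwE by blast
      have v': "\<phi> (?g J) \<in> hyperbinary n" using phi v bij_betwE by blast
      have PI: "\<Psi> I = Eset n (\<phi> (?g I))" "\<Psi> J = Eset n (\<phi> (?g J))" by (simp_all add: \<Psi>_def)
      have c1: "(arcA m (?g I) (?g J) \<longleftrightarrow> marc (bits m) I J True) \<and> (arcB m (?g I) (?g J) \<longleftrightarrow> marc (bits m) I J False)"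
        using arc_corr[OF u v] EI EJ by simp
      have c2: "(arcA n (\<phi> (?g I)) (\<phi> (?g J)) \<longleftrightarrow> marc (bits n) (\<Psi> I) (\<Psi> J) True) \<and>
               (arcB n (\<phi> (?g I)) (\<phi> (?g J)) \<longleftrightarrow> marc (bits n) (\<Psi> I) (\<Psi> J) False)"
        using arc_corr[OF u' v'] PI by simp
      have c3: "(arcA m (?g I) (?g J) \<longleftrightarrow> arcA n (\<phi> (?g I)) (\<phi> (?g J))) \<and>
               (arcB m (?g I) (?g J) \<longleftrightarrow> arcB n (\<phi> (?g I)) (\<phi> (?g J)))"
        using ar u v by blast
      show "marc (bits m) I J l \<longleftrightarrow> marc (bits n) (\<Psi> I) (\<Psi> J) l"
        using c1 c2 c3 by (cases l) simp_all
    qed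
    have R: "Mm = Mn \<and> (\<forall>p\<in>{1..Mm}. bits n p = bits m p)"
      using model_recover[OF iso Mm1 Mn1 bitsM[OF Mm] bitsM[OF Mn]] .
    show ?thesis using eq_from_bits[of Mm n m] R assms(1,2) Mm(2) Mn(2) by metis
  qed
qed

end
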